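(* Fix widths $\mathbf{n}=(n_0,\dots,n_L)$, radial rescaling activations $\rho_i=h_i^{(n_i)}$, a finite batch of training data $\{(x_j,y_j)\}\subseteq\mathbb{R}^{n_0}\times\mathbb{R}^{n_L}$, a cost function $\mathcal C:\mathbb{R}^{n_L}\times\mathbb{R}^{n_L}\to\mathbb{R}$ and a learning rate $\eta>0$, and let $\mathcal L,\mathcal L_{\rm red},\gamma,\gamma_{\rm red},\gamma_{\rm proj}$ be as in the context. Let $(\mathbf{W},\mathbf{b})\in\mathsf{Param}(\mathbf{n})$ and let $\mathbf{W}^{\rm red},\mathbf{b}^{\rm red},\mathbf{Q}$ be the outputs of the QR compression algorithm applied to $(\mathbf{W},\mathbf{b})$. Set $\mathbf{U}=\mathbf{Q}^{-1}\cdot(\mathbf{W},\mathbf{b})-\iota(\mathbf{W}^{\rm red},\mathbf{b}^{\rm red})$. Then for every integer $k\ge0$: $$\gamma^k(\mathbf{W},\mathbf{b})=\mathbf{Q}\cdot\gamma^k\big(\mathbf{Q}^{-1}\cdot(\mathbf{W},\mathbf{b})\big),\qquad \gamma_{\rm proj}^k\big(\mathbf{Q}^{-1}\cdot(\mathbf{W},\mathbf{b})\big)=\iota\big(\gamma_{\rm red}^k(\mathbf{W}^{\rm red},\mathbf{b}^{\rm red})\big)+\mathbf{U}.$$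
   Context: Radial rescaling: for $h:\mathbb{R}\to\mathbb{R}$ piecewise differentiable, $h^{(n)}(v)=h(|v|)v/|v|$ ($v\ne0$), $h^{(n)}(0)=0$. $\mathsf{Param}(\mathbf{n})=\prod_{i=1}^L\mathbb{R}^{n_i\times n_{i-1}}\times\prod_{i=1}^L\mathbb{R}^{n_i}$, with elements $(\mathbf{W},\mathbf{b})$, $\mathbf{W}=(W_i)$, $\mathbf{b}=(b_i)$. The feedforward function $F_{(\mathbf{W},\mathbf{b},\boldsymbol\rho)}=F_L$ with $F_0=\mathrm{id}$, $F_i(x)=\rho_i(W_iF_{i-1}(x)+b_i)$. Loss: $\mathcal L(\mathbf{W},\mathbf{b})=\sum_j\mathcal C(F_{(\mathbf{W},\mathbf{b},\boldsymbol\rho)}(x_j),y_j)$; the loss functions are assumed differentiable so that gradients exist. Reduced widths: $n^{\rm red}_0=n_0$, $n^{\rm red}_i=\min(n_i,n^{\rm red}_{i-1}+1)$ for $1\le i\le L-1$, $n^{\rm red}_L=n_L$. $\mathbb{R}^k\subseteq\mathbb{R}^n$ via the first $k$ coordinates; $\rho^{\rm red}_i=h_i^{(n^{\rm red}_i)}$ is the restriction of $\rho_i$. $\mathcal L_{\rm red}$ on $\mathsf{Param}(\mathbf{n}^{\rm red})$ is defined the same way using activations $\rho^{\rm red}_i$. Gradient descent: $\gamma(\mathbf{W},\mathbf{b})=(\mathbf{W},\mathbf{b})-\eta\nabla_{(\mathbf{W},\mathbf{b})}\mathcal L$ on $\mathsf{Param}(\mathbf{n})$, $\gamma_{\rm red}(\mathbf{V},\mathbf{c})=(\mathbf{V},\mathbf{c})-\eta\nabla_{(\mathbf{V},\mathbf{c})}\mathcal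 L_{\rm red}$ on $\mathsf{Param}(\mathbf{n}^{\rm red})$; $\gamma^k$ is the $k$-fold composition. Projected gradient descent: $\gamma_{\rm proj}(\mathbf{W},\mathbf{b})=\mathrm{Proj}(\gamma(\mathbf{W},\mathbf{b}))$, where $\mathrm{Proj}$ sets to zero, for each $i$, the bottom-left $(n_i-n^{\rm red}_i)\times n^{\rm red}_{i-1}$ submatrix of the weight matrix and the bottom $n_i-n^{\rm red}_i$ entries of the bias vector. $\iota:\mathsf{Param}(\mathbf{n}^{\rm red})\hookrightarrow\mathsf{Param}(\mathbf{n})$ places each matrix/vector in the top-left corner, padding with zeros. Action: $\mathbf{Q}=(Q_1,\dots,Q_{L-1})\in O(n_1)\times\dots\times O(n_{L-1})$ acts by $\mathbf{Q}\cdot(\mathbf{W},\mathbf{b})=((Q_iW_iQ_{i-1}^{-1})_i,(Q_ib_i)_i)$ with $Q_0=\mathrm{id}_{n_0}$, $Q_L=\mathrm{id}_{n_L}$. QR compression algorithm: $A_1=[\,b_1\ W_1\,]$; for $i=1,\dots,L-1$, take a complete QR decomposition $A_i=Q_i\mathrm{Inc}_iR_i$ ($Q_i\in O(n_i)$, $R_i$ upper triangular $n^{\rm red}_i\times(1+n^{\rm red}_{i-1})$, $\mathrm{Inc}_i\in\mathbb{R}^{n_i\times n^{\rm red}_i}$ ones on the main diagonal, zeros elsewhere); $b^{\rm red}_i$ = first column of $R_i$, $W^{\rm red}_i$ = remaining columns; $A_{i+1}=[\,b_{i+1}\ W_{i+1}Q_i\mathrm{Inc}_i\,]$. Finally $b^{\rm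 red}_L,W^{\rm red}_L$ are the first column and the remaining columns of $A_L$. Outputs $\mathbf{Q}=(Q_i)$, $\mathbf{W}^{\rm red},\mathbf{b}^{\rm red}$. *)

theory Defs
  imports Complex_Main "Jordan_Normal_Form.Matrix"
begin

text \<open>A parameter (W,b) is a pair of lists of length L: the list entry with index i-1
  is W_i (an n_i x n_{i-1} real matrix) resp. b_i (a vector in R^{n_i}).\<close>

type_synonym param = "real mat list \<times> real vec list"

definition nlayers :: "nat list \<Rightarrow> nat" where
  "nlayers ns = length ns - 1"

definition Param :: "nat list \<Rightarrow> param set" where
  "Param ns = {(Ws, bs). length Ws = nlayers ns \<and> length bs = nlayers ns \<and>
      (\<forall>i < nlayers ns. Ws ! i \<in> carrier_mat (ns ! Suc i) (ns ! i) \<and>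
                         bs ! i \<in> carrier_vec (ns ! Suc i))}"

definition padd :: "param \<Rightarrow> param \<Rightarrow> param" where
  "padd p q = (map2 (+) (fst p) (fst q), map2 (+) (snd p) (snd q))"

definition psub :: "param \<Rightarrow> param \<Rightarrow> param" where
  "psub p q = (map2 (-) (fst p) (fst q), map2 (-) (snd p) (snd q))"

definition psmult :: "real \<Rightarrow> param \<Rightarrow> param" where
  "psmult a p = (map (\<lambda>W. a \<cdot>\<^sub>m W) (fst p), map (\<lambda>b. a \<cdot>\<^sub>v b) (snd p))"

definition pinner :: "param \<Rightarrow> param \<Rightarrow> real" where
  "pinner p q =
     (\<Sum>i<length (fst p). \<Sum>r<dim_row (fst p ! i). \<Sum>c<dim_col (fst p ! i).
         (fst p ! i) $$ (r, c) * (fst q ! i) $$ (r, c))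
   + (\<Sum>i<length (snd p). \<Sum>r<dim_vec (snd p ! i). (snd p ! i) $ r * (snd q ! i) $ r)"

definition pnorm :: "param \<Rightarrow> real" where
  "pnorm p = sqrt (pinner p p)"

definition has_grad :: "(param \<Rightarrow> real) \<Rightarrow> nat list \<Rightarrow> param \<Rightarrow> param \<Rightarrow> bool" where
  "has_grad f ns p g \<longleftrightarrow> g \<in> Param ns \<and>
     (\<forall>\<epsilon>>0. \<exists>\<delta>>0. \<forall>q\<in>Param ns. pnorm q < \<delta> \<longrightarrow>
        \<bar>f (padd p q) - f p - pinner g q\<bar> \<le> \<epsilon> * pnorm q)"

definition grad :: "(param \<Rightarrow> real) \<Rightarrow> nat list \<Rightarrow> param \<Rightarrow> param" where
  "grad f ns p = (THE g. has_grad f ns p g)"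

definition differentiable_on_Param :: "(param \<Rightarrow> real) \<Rightarrow> nat list \<Rightarrow> bool" where
  "differentiable_on_Param f ns \<longleftrightarrow> (\<forall>p\<in>Param ns. \<exists>g. has_grad f ns p g)"

definition vnorm :: "real vec \<Rightarrow> real" where
  "vnorm v = sqrt (v \<bullet> v)"

definition radial :: "(real \<Rightarrow> real) \<Rightarrow> real vec \<Rightarrow> real vec" where
  "radial h v = (if v = 0\<^sub>v (dim_vec v) then 0\<^sub>v (dim_vec v)
                 else (h (vnorm v) / vnorm v) \<cdot>\<^sub>v v)"

definition piecewise_differentiable :: "(real \<Rightarrow> real) \<Rightarrow> bool" where
  "piecewise_differentiable h \<longleftrightarrow>
     (\<exists>S. finite S \<and> (\<forall>t. t \<notin> S \<longrightarrow> h differentiable (at t)))"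

text \<open>ff h i Ws bs x: apply layers i, i+1, ... ; layer j uses activation radial (h j).
  F_{(W,b,rho)} (x) = ff h 1 Ws bs x.\<close>
fun ff :: "(nat \<Rightarrow> real \<Rightarrow> real) \<Rightarrow> nat \<Rightarrow> real mat list \<Rightarrow> real vec list \<Rightarrow> real vec \<Rightarrow> real vec" where
  "ff h i (W # Ws) (b # bs) x = ff h (Suc i) Ws bs (radial (h i) (W *\<^sub>v x + b))"
| "ff h i _ _ x = x"

definition feedforward :: "(nat \<Rightarrow> real \<Rightarrow> real) \<Rightarrow> param \<Rightarrow> real vec \<Rightarrow> real vec" where
  "feedforward h p x = ff h 1 (fst p) (snd p) x"

definition loss :: "(nat \<Rightarrow> real \<Rightarrow> real) \<Rightarrow> (real vec \<Rightarrow> real vec \<Rightarrow> real)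
    \<Rightarrow> (real vec \<times> real vec) list \<Rightarrow> param \<Rightarrow> real" where
  "loss h C D p = (\<Sum>(x, y) \<leftarrow> D. C (feedforward h p x) y)"

definition gd_step :: "(param \<Rightarrow> real) \<Rightarrow> real \<Rightarrow> nat list \<Rightarrow> param \<Rightarrow> param" where
  "gd_step f \<eta> ns p = psub p (psmult \<eta> (grad f ns p))"

fun rw :: "nat list \<Rightarrow> nat \<Rightarrow> nat" where
  "rw ns 0 = ns ! 0"
| "rw ns (Suc i) = min (ns ! Suc i) (rw ns i + 1)"

definition red_widths :: "nat list \<Rightarrow> nat list" where
  "red_widths ns = map (\<lambda>i. if i = nlayers ns then ns ! i else rw ns i) [0..<length ns]"

definition embed :: "nat list \<Rightarrow> param \<Rightarrow> param" where
  "embed ns p = (let nr = red_widths ns in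
     (map (\<lambda>i. mat (ns ! Suc i) (ns ! i) (\<lambda>(r, c).
                  if r < nr ! Suc i \<and> c < nr ! i then (fst p ! i) $$ (r, c) else 0))
          [0..<nlayers ns],
      map (\<lambda>i. vec (ns ! Suc i) (\<lambda>r. if r < nr ! Suc i then (snd p ! i) $ r else 0))
          [0..<nlayers ns]))"

definition proj :: "nat list \<Rightarrow> param \<Rightarrow> param" where
  "proj ns p = (let nr = red_widths ns in
     (map (\<lambda>i. let W = fst p ! i in mat (dim_row W) (dim_col W) (\<lambda>(r, c).
                  if nr ! Suc i \<le> r \<and> c < nr ! i then 0 else W $$ (r, c)))
          [0..<length (fst p)],
      map (\<lambda>i. let b = snd p ! i in vec (dim_vec b) (\<lambda>r. if nr ! Suc i \<le> r then 0 else b $ r))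
          [0..<length (snd p)]))"

definition pgd_step :: "(param \<Rightarrow> real) \<Rightarrow> real \<Rightarrow> nat list \<Rightarrow> param \<Rightarrow> param" where
  "pgd_step f \<eta> ns p = proj ns (gd_step f \<eta> ns p)"

definition orth_mat :: "nat \<Rightarrow> real mat \<Rightarrow> bool" where
  "orth_mat n Q \<longleftrightarrow> Q \<in> carrier_mat n n \<and> Q * transpose_mat Q = 1\<^sub>m n \<and> transpose_mat Q * Q = 1\<^sub>m n"

text \<open>Q i for 1 \<le> i \<le> L-1; Q_0 and Q_L are the identities. For Q in O(n), Q^{-1} = Q^T.\<close>
definition Qext :: "nat list \<Rightarrow> (nat \<Rightarrow> real mat) \<Rightarrow> nat \<Rightarrow> real mat" where
  "Qext ns Q i = (if i = 0 \<or> i = nlayers ns then 1\<^sub>m (ns ! i) else Q i)"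

definition act :: "nat list \<Rightarrow> (nat \<Rightarrow> real mat) \<Rightarrow> param \<Rightarrow> param" where
  "act ns Q p =
     (map (\<lambda>i. Qext ns Q (Suc i) * (fst p ! i) * transpose_mat (Qext ns Q i)) [0..<length (fst p)],
      map (\<lambda>i. Qext ns Q (Suc i) *\<^sub>v (snd p ! i)) [0..<length (snd p)])"

definition act_inv :: "nat list \<Rightarrow> (nat \<Rightarrow> real mat) \<Rightarrow> param \<Rightarrow> param" where
  "act_inv ns Q p = act ns (\<lambda>i. transpose_mat (Q i)) p"

definition aug :: "real vec \<Rightarrow> real mat \<Rightarrow> real mat" where
  "aug b W = mat (dim_row W) (Suc (dim_col W)) (\<lambda>(r, c). if c = 0 then b $ r else W $$ (r, c - 1))"

definition Inc :: "nat \<Rightarrow> nat \<Rightarrow> real mat" where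
  "Inc n m = mat n m (\<lambda>(r, c). if r = c then 1 else 0)"

text \<open>qrA ns p Q i = A_i (for i \<ge> 1): A_1 = [b_1 W_1], A_{i+1} = [b_{i+1}  W_{i+1} Q_i Inc_i].\<close>
fun qrA :: "nat list \<Rightarrow> param \<Rightarrow> (nat \<Rightarrow> real mat) \<Rightarrow> nat \<Rightarrow> real mat" where
  "qrA ns p Q 0 = 0\<^sub>m 0 0"
| "qrA ns p Q (Suc 0) = aug (snd p ! 0) (fst p ! 0)"
| "qrA ns p Q (Suc (Suc k)) =
     aug (snd p ! Suc k) (fst p ! Suc k * Q (Suc k) * Inc (ns ! Suc k) (red_widths ns ! Suc k))"

text \<open>(Wred, bred) and Q are outputs of the QR compression algorithm applied to p,
  for some choice of complete QR decompositions A_i = Q_i Inc_i R_i.\<close>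
definition qr_outputs :: "nat list \<Rightarrow> param \<Rightarrow> (nat \<Rightarrow> real mat) \<Rightarrow> param \<Rightarrow> bool" where
  "qr_outputs ns p Q pr \<longleftrightarrow>
     (let L = nlayers ns; nr = red_widths ns in
      length (fst pr) = L \<and> length (snd pr) = L \<and>
      (\<exists>R :: nat \<Rightarrow> real mat. \<forall>i. 1 \<le> i \<and> i \<le> L - 1 \<longrightarrow>
          orth_mat (ns ! i) (Q i) \<and>
          R i \<in> carrier_mat (nr ! i) (1 + nr ! (i - 1)) \<and> upper_triangular (R i) \<and>
          qrA ns p Q i = Q i * Inc (ns ! i) (nr ! i) * R i \<and>
          snd pr ! (i - 1) = col (R i) 0 \<and>
          fst pr ! (i - 1) = mat (nr ! i) (nr ! (i - 1)) (\<lambda>(r, c). R i $$ (r, Suc c))) \<and>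
      snd pr ! (L - 1) = col (qrA ns p Q L) 0 \<and>
      fst pr ! (L - 1) = mat (dim_row (qrA ns p Q L)) (dim_col (qrA ns p Q L) - 1)
                             (\<lambda>(r, c). qrA ns p Q L $$ (r, Suc c)))"

end

theory Submission
  imports Defs
begin

lemma nth_map2' [simp]: "i < length xs \<Longrightarrow> i < length ys \<Longrightarrow> map2 f xs ys ! i = f (xs ! i) (ys ! i)"
  by simp

lemma ParamD:
  assumes "p \<in> Param ns"
  shows "length (fst p) = nlayers ns" "length (snd p) = nlayers ns"
    "\<And>i. i < nlayers ns \<Longrightarrow> fst p ! i \<in> carrier_mat (ns ! Suc i) (ns ! i)"
    "\<And>i. i < nlayers ns \<Longrightarrow> snd p ! i \<in> carrier_vec (ns ! Suc i)"
  using assms by (auto simp: Param_def)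

lemma ParamI:
  assumes "length (fst p) = nlayers ns" "length (snd p) = nlayers ns"
    "\<And>i. i < nlayers ns \<Longrightarrow> fst p ! i \<in> carrier_mat (ns ! Suc i) (ns ! i)"
    "\<And>i. i < nlayers ns \<Longrightarrow> snd p ! i \<in> carrier_vec (ns ! Suc i)"
  shows "p \<in> Param ns"
  using assms by (cases p) (auto simp: Param_def)

lemma param_eqI:
  assumes p: "p \<in> Param ns" and q: "q \<in> Param ns"
    and W: "\<And>i a c. i < nlayers ns \<Longrightarrow> a < ns ! Suc i \<Longrightarrow> c < ns ! i \<Longrightarrow>
               fst p ! i $$ (a, c) = fst q ! i $$ (a, c)"
    and b: "\<And>i a. i < nlayers ns \<Longrightarrow> a < ns ! Suc i \<Longrightarrow> snd p ! i $ a = snd q ! i $ a"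
  shows "p = q"
proof -
  have "fst p = fst q"
  proof (rule nth_equalityI)
    show "length (fst p) = length (fst q)" using ParamD[OF p] ParamD[OF q] by simp
    fix i assume "i < length (fst p)"
    then have i: "i < nlayers ns" using ParamD[OF p] by simp
    show "fst p ! i = fst q ! i"
      using ParamD(3)[OF p i] ParamD(3)[OF q i] W[OF i] by (intro eq_matI) auto
  qed
  moreover have "snd p = snd q"
  proof (rule nth_equalityI)
    show "length (snd p) = length (snd q)" using ParamD[OF p] ParamD[OF q] by simp
    fix i assume "i < length (snd p)"
    then have i: "i < nlayers ns" using ParamD[OF p] by simp
    show "snd p ! i = snd q ! i"
      using ParamD(4)[OF p i] ParamD(4)[OF q i] b[OF i] by (intro eq_vecI) auto
  qed
  ultimately show ?thesis by (simp add: prod_eq_iff)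
qed

lemma padd_nth:
  assumes "p \<in> Param ns" "q \<in> Param ns" "i < nlayers ns"
  shows "fst (padd p q) ! i = fst p ! i + fst q ! i" "snd (padd p q) ! i = snd p ! i + snd q ! i"
  using ParamD[OF assms(1)] ParamD[OF assms(2)] assms(3) by (auto simp: padd_def)

lemma psub_nth:
  assumes "p \<in> Param ns" "q \<in> Param ns" "i < nlayers ns"
  shows "fst (psub p q) ! i = fst p ! i - fst q ! i" "snd (psub p q) ! i = snd p ! i - snd q ! i"
  using ParamD[OF assms(1)] ParamD[OF assms(2)] assms(3) by (auto simp: psub_def)

lemma psmult_nth:
  assumes "p \<in> Param ns" "i < nlayers ns"
  shows "fst (psmult t p) ! i = t \<cdot>\<^sub>m fst p ! i" "snd (psmult t p) ! i = t \<cdot>\<^sub>v snd p ! i"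
  using ParamD[OF assms(1)] assms(2) by (auto simp: psmult_def)

lemma padd_Param: assumes "p \<in> Param ns" "q \<in> Param ns" shows "padd p q \<in> Param ns"
proof (rule ParamI)
  fix i assume i: "i < nlayers ns"
  show "fst (padd p q) ! i \<in> carrier_mat (ns ! Suc i) (ns ! i)"
    using ParamD(3)[OF assms(1) i] ParamD(3)[OF assms(2) i] by (simp add: padd_nth[OF assms i])
  show "snd (padd p q) ! i \<in> carrier_vec (ns ! Suc i)"
    using ParamD(4)[OF assms(1) i] ParamD(4)[OF assms(2) i] by (simp add: padd_nth[OF assms i])
qed (auto simp: padd_def ParamD[OF assms(1)] ParamD[OF assms(2)])

lemma psub_Param: assumes "p \<in> Param ns" "q \<in> Param ns" shows "psub p q \<in> Param ns"
proof (rule ParamI)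
  fix i assume i: "i < nlayers ns"
  show "fst (psub p q) ! i \<in> carrier_mat (ns ! Suc i) (ns ! i)"
    using ParamD(3)[OF assms(1) i] ParamD(3)[OF assms(2) i] by (simp add: psub_nth[OF assms i] minus_carrier_mat)
  show "snd (psub p q) ! i \<in> carrier_vec (ns ! Suc i)"
    using ParamD(4)[OF assms(1) i] ParamD(4)[OF assms(2) i] by (simp add: psub_nth[OF assms i] minus_carrier_mat)
qed (auto simp: psub_def ParamD[OF assms(1)] ParamD[OF assms(2)])

lemma psmult_Param: assumes "p \<in> Param ns" shows "psmult t p \<in> Param ns"
proof (rule ParamI)
  fix i assume i: "i < nlayers ns"
  show "fst (psmult t p) ! i \<in> carrier_mat (ns ! Suc i) (ns ! i)"
    using ParamD(3)[OF assms(1) i] by (simp add: psmult_nth[OF assms i])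
  show "snd (psmult t p) ! i \<in> carrier_vec (ns ! Suc i)"
    using ParamD(4)[OF assms(1) i] by (simp add: psmult_nth[OF assms i])
qed (auto simp: psmult_def ParamD[OF assms(1)])

lemma padd_entries:
  assumes "p \<in> Param ns" "q \<in> Param ns" "i < nlayers ns" "a < ns ! Suc i" "c < ns ! i"
  shows "fst (padd p q) ! i $$ (a, c) = fst p ! i $$ (a, c) + fst q ! i $$ (a, c)"
  using assms ParamD(3)[OF assms(1) assms(3)] ParamD(3)[OF assms(2) assms(3)] by (simp add: padd_nth)

definition frob :: "real mat \<Rightarrow> real mat \<Rightarrow> real" where
  "frob A B = (\<Sum>r<dim_row A. \<Sum>c<dim_col A. A $$ (r, c) * B $$ (r, c))"

definition vin :: "real vec \<Rightarrow> real vec \<Rightarrow> real" where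
  "vin v w = (\<Sum>r<dim_vec v. v $ r * w $ r)"

lemma pinner_alt: "pinner p q = (\<Sum>i<length (fst p). frob (fst p ! i) (fst q ! i))
   + (\<Sum>i<length (snd p). vin (snd p ! i) (snd q ! i))"
  unfolding pinner_def frob_def vin_def ..

lemma frob_smult_left: "frob (t \<cdot>\<^sub>m A) B = t * frob A B"
  unfolding frob_def by (simp add: sum_distrib_left mult.assoc)

lemma vin_smult_left: "vin (t \<cdot>\<^sub>v A) B = t * vin A B"
  unfolding vin_def by (simp add: sum_distrib_left mult.assoc)

lemma frob_smult_right: "B \<in> carrier_mat (dim_row A) (dim_col A) \<Longrightarrow> frob A (t \<cdot>\<^sub>m B) = t * frob A B"
  unfolding frob_def by (simp add: sum_distrib_left mult.left_commute)

lemma vin_smult_right: "B \<in> carrier_vec (dim_vec A) \<Longrightarrow> vin A (t \<cdot>\<^sub>v B) = t * vin A B"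
  unfolding vin_def by (simp add: sum_distrib_left mult.left_commute)

lemma frob_nonneg: "frob A A \<ge> 0"
  unfolding frob_def by (intro sum_nonneg) auto

lemma vin_nonneg: "vin A A \<ge> 0"
  unfolding vin_def by (intro sum_nonneg) auto

lemma pinner_nonneg: "pinner p p \<ge> 0"
  unfolding pinner_alt by (intro add_nonneg_nonneg sum_nonneg frob_nonneg vin_nonneg)

lemma pinner_smult_right:
  assumes "p \<in> Param ns" "u \<in> Param ns"
  shows "pinner p (psmult t u) = t * pinner p u"
proof -
  have "(\<Sum>i<length (fst p). frob (fst p ! i) (fst (psmult t u) ! i)) = t * (\<Sum>i<length (fst p). frob (fst p ! i) (fst u ! i))"
    unfolding sum_distrib_left
  proof (rule sum.cong)
    fix i assume "i \<in> {..<length (fst p)}"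
    then have i: "i < nlayers ns" using ParamD[OF assms(1)] by simp
    show "frob (fst p ! i) (fst (psmult t u) ! i) = t * frob (fst p ! i) (fst u ! i)"
      using ParamD(3)[OF assms(1) i] ParamD(3)[OF assms(2) i]
      by (simp add: psmult_nth[OF assms(2) i] frob_smult_right)
  qed simp
  moreover have "(\<Sum>i<length (snd p). vin (snd p ! i) (snd (psmult t u) ! i)) = t * (\<Sum>i<length (snd p). vin (snd p ! i) (snd u ! i))"
    unfolding sum_distrib_left
  proof (rule sum.cong)
    fix i assume "i \<in> {..<length (snd p)}"
    then have i: "i < nlayers ns" using ParamD[OF assms(1)] by simp
    show "vin (snd p ! i) (snd (psmult t u) ! i) = t * vin (snd p ! i) (snd u ! i)"
      using ParamD(4)[OF assms(1) i] ParamD(4)[OF assms(2) i]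
      by (simp add: psmult_nth[OF assms(2) i] vin_smult_right)
  qed simp
  ultimately show ?thesis unfolding pinner_alt by (simp add: algebra_simps)
qed

lemma pinner_smult_left:
  assumes "u \<in> Param ns"
  shows "pinner (psmult t u) q = t * pinner u q"
proof -
  have l: "length (fst (psmult t u)) = length (fst u)" "length (snd (psmult t u)) = length (snd u)"
    by (auto simp: psmult_def)
  have "(\<Sum>i<length (fst u). frob (fst (psmult t u) ! i) (fst q ! i)) = t * (\<Sum>i<length (fst u). frob (fst u ! i) (fst q ! i))"
    unfolding sum_distrib_left
    by (rule sum.cong) (auto simp: psmult_def frob_smult_left)
  moreover have "(\<Sum>i<length (snd u). vin (snd (psmult t u) ! i) (snd q ! i)) = t * (\<Sum>i<length (snd u). vin (snd u ! i) (snd q ! i))"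
    unfolding sum_distrib_left
    by (rule sum.cong) (auto simp: psmult_def vin_smult_left)
  ultimately show ?thesis unfolding pinner_alt l by (simp add: algebra_simps)
qed

lemma pnorm_smult:
  assumes "u \<in> Param ns"
  shows "pnorm (psmult t u) = \<bar>t\<bar> * pnorm u"
proof -
  have "pinner (psmult t u) (psmult t u) = t\<^sup>2 * pinner u u"
    using pinner_smult_left[OF assms] pinner_smult_right[OF assms assms] by (simp add: power2_eq_square)
  then show ?thesis unfolding pnorm_def by (simp add: real_sqrt_mult)
qed

lemma pnorm_nonneg: "pnorm u \<ge> 0"
  unfolding pnorm_def using pinner_nonneg by simp

lemma dir_deriv_eq:
  assumes g: "has_grad f ns P g" and g': "has_grad f' ns' r g'"
    and u: "u \<in> Param ns" and u': "u' \<in> Param ns'"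
    and f0: "f P = f' r"
    and ft: "\<And>t. f (padd P (psmult t u)) = f' (padd r (psmult t u'))"
  shows "pinner g u = pinner g' u'"
proof (rule ccontr)
  assume ne: "pinner g u \<noteq> pinner g' u'"
  define d where "d = \<bar>pinner g u - pinner g' u'\<bar>"
  have d: "d > 0" using ne by (simp add: d_def)
  define N where "N = pnorm u + pnorm u' + 1"
  have N: "N > 0" "pnorm u \<le> N" "pnorm u' \<le> N" using pnorm_nonneg[of u] pnorm_nonneg[of u'] by (auto simp: N_def)
  define e where "e = d / (4 * N)"
  have e: "e > 0" using d N by (simp add: e_def)
  obtain \<delta>1 where d1: "\<delta>1 > 0" and b1: "\<And>q. q \<in> Param ns \<Longrightarrow> pnorm q < \<delta>1 \<Longrightarrow>
      \<bar>f (padd P q) - f P - pinner g q\<bar> \<le> e * pnorm q"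
    using g e unfolding has_grad_def by meson
  obtain \<delta>2 where d2: "\<delta>2 > 0" and b2: "\<And>q. q \<in> Param ns' \<Longrightarrow> pnorm q < \<delta>2 \<Longrightarrow>
      \<bar>f' (padd r q) - f' r - pinner g' q\<bar> \<le> e * pnorm q"
    using g' e unfolding has_grad_def by meson
  define t where "t = min \<delta>1 \<delta>2 / (2 * N)"
  have t: "t > 0" using d1 d2 N by (simp add: t_def)
  have tN: "t * N < \<delta>1" "t * N < \<delta>2" using d1 d2 N by (auto simp: t_def)
  have gP: "g \<in> Param ns" "g' \<in> Param ns'" using g g' by (auto simp: has_grad_def)
  have n1: "pnorm (psmult t u) = t * pnorm u" using pnorm_smult[OF u] t by simp
  have n2: "pnorm (psmult t u') = t * pnorm u'" using pnorm_smult[OF u'] t by simp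
  have "t * pnorm u \<le> t * N" "t * pnorm u' \<le> t * N" using N t by auto
  then have l1: "pnorm (psmult t u) < \<delta>1" and l2: "pnorm (psmult t u') < \<delta>2" using tN n1 n2 by auto
  have B1: "\<bar>f (padd P (psmult t u)) - f P - t * pinner g u\<bar> \<le> e * (t * pnorm u)"
    using b1[OF psmult_Param[OF u] l1] n1 pinner_smult_right[OF gP(1) u] by simp
  have B2: "\<bar>f (padd P (psmult t u)) - f P - t * pinner g' u'\<bar> \<le> e * (t * pnorm u')"
    using b2[OF psmult_Param[OF u'] l2] n2 pinner_smult_right[OF gP(2) u'] ft f0 by simp
  have "t * d = \<bar>t * pinner g u - t * pinner g' u'\<bar>" using t by (simp add: d_def abs_mult right_diff_distrib[symmetric])
  also have "\<dots> \<le> e * (t * pnorm u) + e * (t * pnorm u')" using B1 B2 by linarith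
  also have "\<dots> \<le> e * (t * N) + e * (t * N)" using N e t by (intro add_mono mult_left_mono) auto
  also have "\<dots> = t * d / 2" using N by (simp add: e_def field_simps)
  finally show False using t d by simp
qed

lemma if_conj_0: "(if P \<and> Q then x else (0::real)) = (if P then if Q then x else 0 else 0)" by simp

lemma sum_if_const: "(\<Sum>x\<in>A. if P then f x else (0::real)) = (if P then sum f A else 0)"
  by (cases P) auto

definition emat :: "nat list \<Rightarrow> nat \<Rightarrow> nat \<Rightarrow> nat \<Rightarrow> param" where
  "emat ns i a c = (map (\<lambda>j. mat (ns ! Suc j) (ns ! j) (\<lambda>(x, y). if j = i \<and> x = a \<and> y = c then 1 else 0)) [0..<nlayers ns],
                    map (\<lambda>j. 0\<^sub>v (ns ! Suc j)) [0..<nlayers ns])"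

definition evec :: "nat list \<Rightarrow> nat \<Rightarrow> nat \<Rightarrow> param" where
  "evec ns i a = (map (\<lambda>j. 0\<^sub>m (ns ! Suc j) (ns ! j)) [0..<nlayers ns],
                  map (\<lambda>j. vec (ns ! Suc j) (\<lambda>x. if j = i \<and> x = a then 1 else 0)) [0..<nlayers ns])"

lemma emat_Param: "emat ns i a c \<in> Param ns"
  by (rule ParamI) (auto simp: emat_def)

lemma evec_Param: "evec ns i a \<in> Param ns"
  by (rule ParamI) (auto simp: evec_def)

lemma pinner_emat:
  assumes g: "g \<in> Param ns" and i: "i < nlayers ns" and a: "a < ns ! Suc i" and c: "c < ns ! i"
  shows "pinner g (emat ns i a c) = fst g ! i $$ (a, c)"
proof -
  have "(\<Sum>j<length (fst g). frob (fst g ! j) (fst (emat ns i a c) ! j)) = (\<Sum>j\<in>{i}. frob (fst g ! j) (fst (emat ns i a c) ! j))"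
  proof (rule sum.mono_neutral_right)
    show "\<forall>j\<in>{..<length (fst g)} - {i}. frob (fst g ! j) (fst (emat ns i a c) ! j) = 0"
    proof
      fix j assume "j \<in> {..<length (fst g)} - {i}"
      then have j: "j < nlayers ns" "j \<noteq> i" using ParamD[OF g] by auto
      show "frob (fst g ! j) (fst (emat ns i a c) ! j) = 0"
        using ParamD(3)[OF g j(1)] j by (auto simp: frob_def emat_def intro!: sum.neutral)
    qed
  qed (use ParamD[OF g] i in auto)
  also have "\<dots> = frob (fst g ! i) (fst (emat ns i a c) ! i)" by simp
  also have "\<dots> = fst g ! i $$ (a, c)"
    using ParamD(3)[OF g i] a c i
    by (simp add: frob_def emat_def if_distrib[of "\<lambda>x. _ * x"] if_conj_0 sum_if_const sum.delta' cong: if_cong)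
  finally have 1: "(\<Sum>j<length (fst g). frob (fst g ! j) (fst (emat ns i a c) ! j)) = fst g ! i $$ (a, c)" .
  have 2: "(\<Sum>j<length (snd g). vin (snd g ! j) (snd (emat ns i a c) ! j)) = 0"
  proof (intro sum.neutral ballI)
    fix j assume "j \<in> {..<length (snd g)}"
    then have j: "j < nlayers ns" using ParamD[OF g] by auto
    show "vin (snd g ! j) (snd (emat ns i a c) ! j) = 0"
      using ParamD(4)[OF g j] j by (auto simp: vin_def emat_def intro!: sum.neutral)
  qed
  show ?thesis unfolding pinner_alt 1 2 by simp
qed

lemma pinner_evec:
  assumes g: "g \<in> Param ns" and i: "i < nlayers ns" and a: "a < ns ! Suc i"
  shows "pinner g (evec ns i a) = snd g ! i $ a"
proof -
  have "(\<Sum>j<length (snd g). vin (snd g ! j) (snd (evec ns i a) ! j)) = (\<Sum>j\<in>{i}. vin (snd g ! j) (snd (evec ns i a) ! j))"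
  proof (rule sum.mono_neutral_right)
    show "\<forall>j\<in>{..<length (snd g)} - {i}. vin (snd g ! j) (snd (evec ns i a) ! j) = 0"
    proof
      fix j assume "j \<in> {..<length (snd g)} - {i}"
      then have j: "j < nlayers ns" "j \<noteq> i" using ParamD[OF g] by auto
      show "vin (snd g ! j) (snd (evec ns i a) ! j) = 0"
        using ParamD(4)[OF g j(1)] j by (auto simp: vin_def evec_def intro!: sum.neutral)
    qed
  qed (use ParamD[OF g] i in auto)
  also have "\<dots> = vin (snd g ! i) (snd (evec ns i a) ! i)" by simp
  also have "\<dots> = snd g ! i $ a"
    using ParamD(4)[OF g i] a i
    by (simp add: vin_def evec_def if_distrib[of "\<lambda>x. _ * x"] sum.delta' cong: if_cong)
  finally have 1: "(\<Sum>j<length (snd g). vin (snd g ! j) (snd (evec ns i a) ! j)) = snd g ! i $ a" .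
  have 2: "(\<Sum>j<length (fst g). frob (fst g ! j) (fst (evec ns i a) ! j)) = 0"
  proof (intro sum.neutral ballI)
    fix j assume "j \<in> {..<length (fst g)}"
    then have j: "j < nlayers ns" using ParamD[OF g] by auto
    show "frob (fst g ! j) (fst (evec ns i a) ! j) = 0"
      using ParamD(3)[OF g j] j by (auto simp: frob_def evec_def intro!: sum.neutral)
  qed
  show ?thesis unfolding pinner_alt 1 2 by simp
qed

lemma has_grad_unique:
  assumes g1: "has_grad f ns p g1" and g2: "has_grad f ns p g2"
  shows "g1 = g2"
proof -
  have P: "g1 \<in> Param ns" "g2 \<in> Param ns" using g1 g2 by (auto simp: has_grad_def)
  show ?thesis
  proof (rule param_eqI[OF P])
    fix i a c assume i: "i < nlayers ns" and a: "a < ns ! Suc i" and c: "c < ns ! i"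
    have "pinner g1 (emat ns i a c) = pinner g2 (emat ns i a c)"
      by (rule dir_deriv_eq[OF g1 g2 emat_Param emat_Param]) auto
    then show "fst g1 ! i $$ (a, c) = fst g2 ! i $$ (a, c)"
      using pinner_emat[OF P(1) i a c] pinner_emat[OF P(2) i a c] by simp
  next
    fix i a assume i: "i < nlayers ns" and a: "a < ns ! Suc i"
    have "pinner g1 (evec ns i a) = pinner g2 (evec ns i a)"
      by (rule dir_deriv_eq[OF g1 g2 evec_Param evec_Param]) auto
    then show "snd g1 ! i $ a = snd g2 ! i $ a"
      using pinner_evec[OF P(1) i a] pinner_evec[OF P(2) i a] by simp
  qed
qed

lemma grad_eq: "has_grad f ns p g \<Longrightarrow> grad f ns p = g"
  unfolding grad_def using has_grad_unique by blast

lemma grad_has: "differentiable_on_Param f ns \<Longrightarrow> p \<in> Param ns \<Longrightarrow> has_grad f ns p (grad f ns p)"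
  unfolding differentiable_on_Param_def using grad_eq by metis

lemma grad_Param: "differentiable_on_Param f ns \<Longrightarrow> p \<in> Param ns \<Longrightarrow> grad f ns p \<in> Param ns"
  using grad_has has_grad_def by blast

lemma gd_step_Param: "differentiable_on_Param f ns \<Longrightarrow> p \<in> Param ns \<Longrightarrow> gd_step f \<eta> ns p \<in> Param ns"
  unfolding gd_step_def by (intro psub_Param psmult_Param grad_Param)

section \<open>Frobenius adjointness\<close>

lemma frob_cols:
  assumes "A \<in> carrier_mat n m" "B \<in> carrier_mat n m"
  shows "frob A B = (\<Sum>c<m. col A c \<bullet> col B c)"
proof -
  have "frob A B = (\<Sum>r<n. \<Sum>c<m. A $$ (r, c) * B $$ (r, c))" using assms by (simp add: frob_def)
  also have "\<dots> = (\<Sum>c<m. \<Sum>r<n. A $$ (r, c) * B $$ (r, c))" by (rule sum.swap)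
  also have "\<dots> = (\<Sum>c<m. col A c \<bullet> col B c)"
    using assms by (intro sum.cong refl) (auto simp: scalar_prod_def lessThan_atLeast0)
  finally show ?thesis .
qed

lemma frob_transpose:
  assumes "A \<in> carrier_mat n m" "B \<in> carrier_mat n m"
  shows "frob A B = frob (transpose_mat A) (transpose_mat B)"
proof -
  have "frob A B = (\<Sum>r<n. \<Sum>c<m. A $$ (r, c) * B $$ (r, c))" using assms by (simp add: frob_def)
  also have "\<dots> = (\<Sum>c<m. \<Sum>r<n. A $$ (r, c) * B $$ (r, c))" by (rule sum.swap)
  also have "\<dots> = frob (transpose_mat A) (transpose_mat B)"
    using assms by (auto simp: frob_def intro!: sum.cong)
  finally show ?thesis .
qed

lemma vec_adj:
  fixes Q :: "real mat"
  assumes Q: "Q \<in> carrier_mat m n" and v: "v \<in> carrier_vec n" and w: "w \<in> carrier_vec m"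
  shows "(Q *\<^sub>v v) \<bullet> w = v \<bullet> (transpose_mat Q *\<^sub>v w)"
proof -
  have "(Q *\<^sub>v v) \<bullet> w = w \<bullet> (Q *\<^sub>v v)" by (rule comm_scalar_prod[OF mult_mat_vec_carrier[OF Q v] w])
  also have "\<dots> = (transpose_mat Q *\<^sub>v w) \<bullet> v" using transpose_vec_mult_scalar[OF Q v w] by simp
  also have "\<dots> = v \<bullet> (transpose_mat Q *\<^sub>v w)" by (rule comm_scalar_prod[OF mult_mat_vec_carrier[OF transpose_carrier_mat[THEN iffD2, OF Q] w] v])
  finally show ?thesis .
qed

lemma frob_mult_left:
  assumes M: "M \<in> carrier_mat n k" and N: "N \<in> carrier_mat k m" and B: "B \<in> carrier_mat n m"
  shows "frob (M * N) B = frob N (transpose_mat M * B)"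
proof -
  have "frob (M * N) B = (\<Sum>c<m. col (M * N) c \<bullet> col B c)" using M N B by (intro frob_cols) auto
  also have "\<dots> = (\<Sum>c<m. col N c \<bullet> col (transpose_mat M * B) c)"
  proof (rule sum.cong[OF refl])
    fix c assume c: "c \<in> {..<m}"
    have "col (M * N) c = M *\<^sub>v col N c" using M N c by auto
    moreover have "col (transpose_mat M * B) c = transpose_mat M *\<^sub>v col B c" using M B c
      by (intro col_mult2[of _ k n _ m]) auto
    moreover have "(M *\<^sub>v col N c) \<bullet> col B c = col N c \<bullet> (transpose_mat M *\<^sub>v col B c)"
      using M N B by (intro vec_adj) auto
    ultimately show "col (M * N) c \<bullet> col B c = col N c \<bullet> col (transpose_mat M * B) c" by simp
  qed
  also have "\<dots> = frob N (transpose_mat M * B)" using M N B by (intro frob_cols[symmetric]) auto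
  finally show ?thesis .
qed

lemma frob_mult_right:
  assumes M: "M \<in> carrier_mat n k" and N: "N \<in> carrier_mat k m" and B: "B \<in> carrier_mat n m"
  shows "frob (M * N) B = frob M (B * transpose_mat N)"
proof -
  have "frob (M * N) B = frob (transpose_mat (M * N)) (transpose_mat B)"
    using M N B by (intro frob_transpose) auto
  also have "transpose_mat (M * N) = transpose_mat N * transpose_mat M" using M N by (rule transpose_mult)
  also have "frob (transpose_mat N * transpose_mat M) (transpose_mat B) = frob (transpose_mat M) (N * transpose_mat B)"
    using M N B by (subst frob_mult_left[of _ m k _ n]) auto
  also have "\<dots> = frob (transpose_mat (transpose_mat M)) (transpose_mat (N * transpose_mat B))"
    using M N B by (intro frob_transpose[of _ k n]) auto
  also have "transpose_mat (N * transpose_mat B) = B * transpose_mat N"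
    using N B by (simp add: transpose_mult[of _ k m _ n])
  finally show ?thesis by simp
qed

lemma vin_scalar: "dim_vec v = dim_vec w \<Longrightarrow> vin v w = v \<bullet> w"
  unfolding vin_def scalar_prod_def by (simp add: lessThan_atLeast0)

section \<open>Orthogonal action\<close>

definition orthE :: "nat list \<Rightarrow> (nat \<Rightarrow> real mat) \<Rightarrow> bool" where
  "orthE ns Q \<longleftrightarrow> (\<forall>j \<le> nlayers ns. orth_mat (ns ! j) (Qext ns Q j))"

lemma Qext_T: "Qext ns (\<lambda>i. transpose_mat (Q i)) j = transpose_mat (Qext ns Q j)"
  by (simp add: Qext_def)

lemma orth_mat_T: "orth_mat n Q \<Longrightarrow> orth_mat n (transpose_mat Q)"
  by (simp add: orth_mat_def)

lemma orthE_T: "orthE ns Q \<Longrightarrow> orthE ns (\<lambda>i. transpose_mat (Q i))"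
  by (simp add: orthE_def Qext_T orth_mat_T)

lemma orthE_D:
  assumes "orthE ns Q" "j \<le> nlayers ns"
  shows "Qext ns Q j \<in> carrier_mat (ns ! j) (ns ! j)"
    "Qext ns Q j * transpose_mat (Qext ns Q j) = 1\<^sub>m (ns ! j)"
    "transpose_mat (Qext ns Q j) * Qext ns Q j = 1\<^sub>m (ns ! j)"
  using assms by (auto simp: orthE_def orth_mat_def)

lemma act_len: "length (fst (act ns Q p)) = length (fst p)" "length (snd (act ns Q p)) = length (snd p)"
  by (auto simp: act_def)

lemma act_nth:
  assumes "p \<in> Param ns" "i < nlayers ns"
  shows "fst (act ns Q p) ! i = Qext ns Q (Suc i) * fst p ! i * transpose_mat (Qext ns Q i)"
    "snd (act ns Q p) ! i = Qext ns Q (Suc i) *\<^sub>v snd p ! i"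
  using ParamD[OF assms(1)] assms(2) by (auto simp: act_def)

lemma act_inv_is_act: "act_inv ns Q p = act ns (\<lambda>i. transpose_mat (Q i)) p"
  by (simp add: act_inv_def)

lemma act_inv_nth:
  assumes "p \<in> Param ns" "i < nlayers ns"
  shows "fst (act_inv ns Q p) ! i = transpose_mat (Qext ns Q (Suc i)) * fst p ! i * Qext ns Q i"
    "snd (act_inv ns Q p) ! i = transpose_mat (Qext ns Q (Suc i)) *\<^sub>v snd p ! i"
  using act_nth[OF assms, of "\<lambda>i. transpose_mat (Q i)"] by (simp_all add: act_inv_is_act Qext_T)

lemma act_Param:
  assumes Q: "orthE ns Q" and p: "p \<in> Param ns"
  shows "act ns Q p \<in> Param ns"
proof (rule ParamI)
  fix i assume i: "i < nlayers ns"
  note c1 = orthE_D(1)[OF Q, of "Suc i"] and c0 = orthE_D(1)[OF Q, of i]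
  show "fst (act ns Q p) ! i \<in> carrier_mat (ns ! Suc i) (ns ! i)"
    using c1 c0 i ParamD(3)[OF p i] by (simp add: act_nth[OF p i])
  show "snd (act ns Q p) ! i \<in> carrier_vec (ns ! Suc i)"
    using c1 i ParamD(4)[OF p i] by (simp add: act_nth[OF p i])
qed (use ParamD[OF p] in \<open>auto simp: act_len\<close>)

lemma act_inv_Param: "orthE ns Q \<Longrightarrow> p \<in> Param ns \<Longrightarrow> act_inv ns Q p \<in> Param ns"
  unfolding act_inv_is_act by (intro act_Param orthE_T)

lemma param_eq_nthI:
  assumes p: "p \<in> Param ns" and q: "q \<in> Param ns"
    and "\<And>i. i < nlayers ns \<Longrightarrow> fst p ! i = fst q ! i"
    and "\<And>i. i < nlayers ns \<Longrightarrow> snd p ! i = snd q ! i"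
  shows "p = q"
  using assms by (intro param_eqI[OF p q]) auto

lemma sandwich_cancel:
  fixes A B W :: "real mat"
  assumes A: "A \<in> carrier_mat n' n'" "A * transpose_mat A = 1\<^sub>m n'"
    and B: "B \<in> carrier_mat n n" "B * transpose_mat B = 1\<^sub>m n"
    and W: "W \<in> carrier_mat n' n"
  shows "A * (transpose_mat A * W * B) * transpose_mat B = W"
proof -
  have At: "transpose_mat A \<in> carrier_mat n' n'" and Bt: "transpose_mat B \<in> carrier_mat n n" using A B by auto
  have TW: "transpose_mat A * W \<in> carrier_mat n' n" using At W by (rule mult_carrier_mat)
  have ATW: "A * (transpose_mat A * W) \<in> carrier_mat n' n" using A(1) TW by (rule mult_carrier_mat)
  have e1: "A * (transpose_mat A * W * B) = (A * (transpose_mat A * W)) * B"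
    using assoc_mult_mat[OF A(1) TW B(1)] by (rule sym)
  have e2: "(A * (transpose_mat A * W)) * B * transpose_mat B = (A * (transpose_mat A * W)) * (B * transpose_mat B)"
    by (rule assoc_mult_mat[OF ATW B(1) Bt])
  have e3: "A * (transpose_mat A * W) = (A * transpose_mat A) * W"
    using assoc_mult_mat[OF A(1) At W] by (rule sym)
  have e4: "1\<^sub>m n' * W = W" by (rule left_mult_one_mat[OF W])
  have e5: "W * 1\<^sub>m n = W" by (rule right_mult_one_mat[OF W])
  have "A * (transpose_mat A * W * B) * transpose_mat B = (A * (transpose_mat A * W)) * (B * transpose_mat B)"
    using e1 e2 by simp
  also have "\<dots> = A * (transpose_mat A * W)" unfolding B(2) by (rule right_mult_one_mat[OF ATW])
  also have "\<dots> = W" unfolding e3 A(2) by (rule e4)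
  finally show ?thesis .
qed

lemma vec_cancel:
  fixes A :: "real mat"
  assumes A: "A \<in> carrier_mat n n" "A * transpose_mat A = 1\<^sub>m n" and b: "b \<in> carrier_vec n"
  shows "A *\<^sub>v (transpose_mat A *\<^sub>v b) = b"
proof -
  have At: "transpose_mat A \<in> carrier_mat n n" using A by auto
  have "(A * transpose_mat A) *\<^sub>v b = A *\<^sub>v (transpose_mat A *\<^sub>v b)"
    by (rule assoc_mult_mat_vec[OF A(1) At b])
  then have "A *\<^sub>v (transpose_mat A *\<^sub>v b) = 1\<^sub>m n *\<^sub>v b" unfolding A(2) by (rule sym)
  also have "\<dots> = b" using b by (rule one_mult_mat_vec)
  finally show ?thesis .
qed

lemma sand_add:
  fixes A W1 W2 Bt :: "real mat"
  assumes "A \<in> carrier_mat n' n'" "W1 \<in> carrier_mat n' n" "W2 \<in> carrier_mat n' n" "Bt \<in> carrier_mat n n"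
  shows "A * (W1 + W2) * Bt = A * W1 * Bt + A * W2 * Bt"
proof -
  have "A * (W1 + W2) = A * W1 + A * W2" using assms by (intro mult_add_distrib_mat) auto
  moreover have "(A * W1 + A * W2) * Bt = A * W1 * Bt + A * W2 * Bt"
    using assms by (intro add_mult_distrib_mat[of _ n' n]) auto
  ultimately show ?thesis by simp
qed

lemma sand_sub:
  fixes A W1 W2 Bt :: "real mat"
  assumes "A \<in> carrier_mat n' n'" "W1 \<in> carrier_mat n' n" "W2 \<in> carrier_mat n' n" "Bt \<in> carrier_mat n n"
  shows "A * (W1 - W2) * Bt = A * W1 * Bt - A * W2 * Bt"
proof -
  have "A * (W1 - W2) = A * W1 - A * W2" using assms by (intro mult_minus_distrib_mat) auto
  moreover have "(A * W1 - A * W2) * Bt = A * W1 * Bt - A * W2 * Bt"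
    using assms by (intro minus_mult_distrib_mat[of _ n' n]) auto
  ultimately show ?thesis by simp
qed

lemma sand_smult:
  fixes A W Bt :: "real mat"
  assumes "A \<in> carrier_mat n' n'" "W \<in> carrier_mat n' n" "Bt \<in> carrier_mat n n"
  shows "A * (t \<cdot>\<^sub>m W) * Bt = t \<cdot>\<^sub>m (A * W * Bt)"
proof -
  have "A * (t \<cdot>\<^sub>m W) = t \<cdot>\<^sub>m (A * W)" using assms by (intro mult_smult_distrib) auto
  moreover have "(t \<cdot>\<^sub>m (A * W)) * Bt = t \<cdot>\<^sub>m (A * W * Bt)"
    using assms by (intro mult_smult_assoc_mat[of _ n' n]) auto
  ultimately show ?thesis by simp
qed

lemma act_act_inv:
  assumes Q: "orthE ns Q" and p: "p \<in> Param ns"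
  shows "act ns Q (act_inv ns Q p) = p"
proof (rule param_eq_nthI[OF act_Param[OF Q act_inv_Param[OF Q p]] p])
  fix i assume i: "i < nlayers ns"
  note P = act_inv_Param[OF Q p]
  show "fst (act ns Q (act_inv ns Q p)) ! i = fst p ! i"
    unfolding act_nth[OF P i] act_inv_nth[OF p i]
    using orthE_D[OF Q, of "Suc i"] orthE_D[OF Q, of i] i ParamD(3)[OF p i]
    by (intro sandwich_cancel) auto
  show "snd (act ns Q (act_inv ns Q p)) ! i = snd p ! i"
    unfolding act_nth[OF P i] act_inv_nth[OF p i]
    using orthE_D[OF Q, of "Suc i"] i ParamD(4)[OF p i]
    by (intro vec_cancel) auto
qed


lemma act_padd:
  assumes Q: "orthE ns Q" and p: "p \<in> Param ns" and q: "q \<in> Param ns"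
  shows "act ns Q (padd p q) = padd (act ns Q p) (act ns Q q)"
proof (rule param_eq_nthI[OF act_Param[OF Q padd_Param[OF p q]] padd_Param[OF act_Param[OF Q p] act_Param[OF Q q]]])
  fix i assume i: "i < nlayers ns"
  note c1 = orthE_D(1)[OF Q, of "Suc i"] and c0 = orthE_D(1)[OF Q, of i]
  have c0t: "transpose_mat (Qext ns Q i) \<in> carrier_mat (ns ! i) (ns ! i)" using c0 i by simp
  show "fst (act ns Q (padd p q)) ! i = fst (padd (act ns Q p) (act ns Q q)) ! i"
    unfolding act_nth[OF padd_Param[OF p q] i] padd_nth[OF act_Param[OF Q p] act_Param[OF Q q] i]
      padd_nth[OF p q i] act_nth[OF p i] act_nth[OF q i]
    using c1 c0t i ParamD(3)[OF p i] ParamD(3)[OF q i]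
    by (intro sand_add) auto
  show "snd (act ns Q (padd p q)) ! i = snd (padd (act ns Q p) (act ns Q q)) ! i"
    unfolding act_nth[OF padd_Param[OF p q] i] padd_nth[OF act_Param[OF Q p] act_Param[OF Q q] i]
      padd_nth[OF p q i] act_nth[OF p i] act_nth[OF q i]
    using c1 i ParamD(4)[OF p i] ParamD(4)[OF q i]
    by (intro mult_add_distrib_mat_vec) auto
qed

lemma act_psub:
  assumes Q: "orthE ns Q" and p: "p \<in> Param ns" and q: "q \<in> Param ns"
  shows "act ns Q (psub p q) = psub (act ns Q p) (act ns Q q)"
proof (rule param_eq_nthI[OF act_Param[OF Q psub_Param[OF p q]] psub_Param[OF act_Param[OF Q p] act_Param[OF Q q]]])
  fix i assume i: "i < nlayers ns"
  note c1 = orthE_D(1)[OF Q, of "Suc i"] and c0 = orthE_D(1)[OF Q, of i]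
  have c0t: "transpose_mat (Qext ns Q i) \<in> carrier_mat (ns ! i) (ns ! i)" using c0 i by simp
  show "fst (act ns Q (psub p q)) ! i = fst (psub (act ns Q p) (act ns Q q)) ! i"
    unfolding act_nth[OF psub_Param[OF p q] i] psub_nth[OF act_Param[OF Q p] act_Param[OF Q q] i]
      psub_nth[OF p q i] act_nth[OF p i] act_nth[OF q i]
    using c1 c0t i ParamD(3)[OF p i] ParamD(3)[OF q i]
    by (intro sand_sub) auto
  show "snd (act ns Q (psub p q)) ! i = snd (psub (act ns Q p) (act ns Q q)) ! i"
    unfolding act_nth[OF psub_Param[OF p q] i] psub_nth[OF act_Param[OF Q p] act_Param[OF Q q] i]
      psub_nth[OF p q i] act_nth[OF p i] act_nth[OF q i]
    using c1 i ParamD(4)[OF p i] ParamD(4)[OF q i]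
    by (intro mult_minus_distrib_mat_vec) auto
qed

lemma act_psmult:
  assumes Q: "orthE ns Q" and p: "p \<in> Param ns"
  shows "act ns Q (psmult t p) = psmult t (act ns Q p)"
proof (rule param_eq_nthI[OF act_Param[OF Q psmult_Param[OF p]] psmult_Param[OF act_Param[OF Q p]]])
  fix i assume i: "i < nlayers ns"
  note c1 = orthE_D(1)[OF Q, of "Suc i"] and c0 = orthE_D(1)[OF Q, of i]
  have c0t: "transpose_mat (Qext ns Q i) \<in> carrier_mat (ns ! i) (ns ! i)" using c0 i by simp
  show "fst (act ns Q (psmult t p)) ! i = fst (psmult t (act ns Q p)) ! i"
    unfolding act_nth[OF psmult_Param[OF p] i] psmult_nth[OF act_Param[OF Q p] i]
      psmult_nth[OF p i] act_nth[OF p i]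
    using c1 c0t i ParamD(3)[OF p i]
    by (intro sand_smult) auto
  show "snd (act ns Q (psmult t p)) ! i = snd (psmult t (act ns Q p)) ! i"
    unfolding act_nth[OF psmult_Param[OF p] i] psmult_nth[OF act_Param[OF Q p] i]
      psmult_nth[OF p i] act_nth[OF p i]
    using c1 i ParamD(4)[OF p i]
    by (intro mult_mat_vec) auto
qed

lemma frob_sand:
  fixes A W Bt V :: "real mat"
  assumes A: "A \<in> carrier_mat n' n'" and W: "W \<in> carrier_mat n' n" and B: "B \<in> carrier_mat n n"
    and V: "V \<in> carrier_mat n' n"
  shows "frob (A * W * transpose_mat B) V = frob W (transpose_mat A * V * B)"
proof -
  have AW: "A * W \<in> carrier_mat n' n" using A W by (rule mult_carrier_mat)
  have Bt: "transpose_mat B \<in> carrier_mat n n" using B by simp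
  have At: "transpose_mat A \<in> carrier_mat n' n'" using A by simp
  have VB: "V * B \<in> carrier_mat n' n" using V B by (rule mult_carrier_mat)
  have "frob (A * W * transpose_mat B) V = frob (A * W) (V * transpose_mat (transpose_mat B))"
    by (rule frob_mult_right[OF AW Bt V])
  also have "\<dots> = frob (A * W) (V * B)" by simp
  also have "\<dots> = frob W (transpose_mat A * (V * B))" by (rule frob_mult_left[OF A W VB])
  also have "transpose_mat A * (V * B) = transpose_mat A * V * B"
    using assoc_mult_mat[OF At V B] by (rule sym)
  finally show ?thesis .
qed

lemma pinner_act:
  assumes Q: "orthE ns Q" and a: "a \<in> Param ns" and b: "b \<in> Param ns"
  shows "pinner (act ns Q a) b = pinner a (act_inv ns Q b)"
proof -
  have "(\<Sum>i<length (fst (act ns Q a)). frob (fst (act ns Q a) ! i) (fst b ! i)) =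
        (\<Sum>i<length (fst a). frob (fst a ! i) (fst (act_inv ns Q b) ! i))"
  proof (rule sum.cong)
    show "{..<length (fst (act ns Q a))} = {..<length (fst a)}" by (simp add: act_len)
    fix i assume "i \<in> {..<length (fst a)}"
    then have i: "i < nlayers ns" using ParamD[OF a] by simp
    show "frob (fst (act ns Q a) ! i) (fst b ! i) = frob (fst a ! i) (fst (act_inv ns Q b) ! i)"
      unfolding act_nth[OF a i] act_inv_nth[OF b i]
      by (rule frob_sand[OF orthE_D(1)[OF Q, of "Suc i"] ParamD(3)[OF a i] orthE_D(1)[OF Q, of i] ParamD(3)[OF b i]])
        (use i in auto)
  qed
  moreover have "(\<Sum>i<length (snd (act ns Q a)). vin (snd (act ns Q a) ! i) (snd b ! i)) =
        (\<Sum>i<length (snd a). vin (snd a ! i) (snd (act_inv ns Q b) ! i))"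
  proof (rule sum.cong)
    show "{..<length (snd (act ns Q a))} = {..<length (snd a)}" by (simp add: act_len)
    fix i assume "i \<in> {..<length (snd a)}"
    then have i: "i < nlayers ns" using ParamD[OF a] by simp
    have c1: "Qext ns Q (Suc i) \<in> carrier_mat (ns ! Suc i) (ns ! Suc i)" using orthE_D(1)[OF Q, of "Suc i"] i by simp
    note va = ParamD(4)[OF a i] and vb = ParamD(4)[OF b i]
    have "vin (Qext ns Q (Suc i) *\<^sub>v snd a ! i) (snd b ! i) = (Qext ns Q (Suc i) *\<^sub>v snd a ! i) \<bullet> (snd b ! i)"
      using c1 va vb by (intro vin_scalar) auto
    also have "\<dots> = snd a ! i \<bullet> (transpose_mat (Qext ns Q (Suc i)) *\<^sub>v snd b ! i)"
      by (rule vec_adj[OF c1 va vb])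
    also have "\<dots> = vin (snd a ! i) (transpose_mat (Qext ns Q (Suc i)) *\<^sub>v snd b ! i)"
      using c1 va vb by (intro vin_scalar[symmetric]) auto
    finally show "vin (snd (act ns Q a) ! i) (snd b ! i) = vin (snd a ! i) (snd (act_inv ns Q b) ! i)"
      unfolding act_nth[OF a i] act_inv_nth[OF b i] .
  qed
  ultimately show ?thesis unfolding pinner_alt by simp
qed

lemma act_inv_T: "act_inv ns (\<lambda>i. transpose_mat (Q i)) p = act ns Q p"
  by (simp add: act_inv_def)

lemma pnorm_act_inv:
  assumes Q: "orthE ns Q" and q: "q \<in> Param ns"
  shows "pnorm (act_inv ns Q q) = pnorm q"
proof -
  have "pinner (act_inv ns Q q) (act_inv ns Q q) = pinner (act ns (\<lambda>i. transpose_mat (Q i)) q) (act_inv ns Q q)"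
    by (simp add: act_inv_is_act)
  also have "\<dots> = pinner q (act_inv ns (\<lambda>i. transpose_mat (Q i)) (act_inv ns Q q))"
    by (rule pinner_act[OF orthE_T[OF Q] q act_inv_Param[OF Q q]])
  also have "\<dots> = pinner q q" unfolding act_inv_T act_act_inv[OF Q q] ..
  finally show ?thesis unfolding pnorm_def by simp
qed

section \<open>Radial activations and the feedforward function under the action\<close>

lemma mult_zero_vec_right: "Q \<in> carrier_mat m n \<Longrightarrow> Q *\<^sub>v 0\<^sub>v n = (0\<^sub>v m :: real vec)"
  by (intro eq_vecI) auto

lemma orth_inv_vec:
  fixes Q :: "real mat"
  assumes Q: "orth_mat n Q" and v: "v \<in> carrier_vec n"
  shows "transpose_mat Q *\<^sub>v (Q *\<^sub>v v) = v"
proof -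
  have Qc: "Q \<in> carrier_mat n n" and Qt: "transpose_mat Q \<in> carrier_mat n n" and I: "transpose_mat Q * Q = 1\<^sub>m n"
    using Q by (auto simp: orth_mat_def)
  have "(transpose_mat Q * Q) *\<^sub>v v = transpose_mat Q *\<^sub>v (Q *\<^sub>v v)" by (rule assoc_mult_mat_vec[OF Qt Qc v])
  then show ?thesis unfolding I using v by simp
qed

lemma vnorm_orth:
  fixes Q :: "real mat"
  assumes Q: "orth_mat n Q" and v: "v \<in> carrier_vec n"
  shows "vnorm (Q *\<^sub>v v) = vnorm v"
proof -
  have Qc: "Q \<in> carrier_mat n n" using Q by (auto simp: orth_mat_def)
  have "(Q *\<^sub>v v) \<bullet> (Q *\<^sub>v v) = v \<bullet> (transpose_mat Q *\<^sub>v (Q *\<^sub>v v))"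
    by (rule vec_adj[OF Qc v mult_mat_vec_carrier[OF Qc v]])
  then show ?thesis unfolding vnorm_def orth_inv_vec[OF Q v] by simp
qed

lemma radial_carrier: "v \<in> carrier_vec n \<Longrightarrow> radial h v \<in> carrier_vec n"
  unfolding radial_def by auto

lemma radial_orth:
  fixes Q :: "real mat"
  assumes Q: "orth_mat n Q" and v: "v \<in> carrier_vec n"
  shows "radial h (Q *\<^sub>v v) = Q *\<^sub>v radial h v"
proof -
  have Qc: "Q \<in> carrier_mat n n" using Q by (auto simp: orth_mat_def)
  have dv: "dim_vec v = n" "dim_vec (Q *\<^sub>v v) = n" using v Qc by auto
  show ?thesis
  proof (cases "v = 0\<^sub>v n")
    case True
    then show ?thesis using Qc dv by (simp add: radial_def mult_zero_vec_right)
  next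
    case False
    have "Q *\<^sub>v v \<noteq> 0\<^sub>v n"
    proof
      assume "Q *\<^sub>v v = 0\<^sub>v n"
      then have "transpose_mat Q *\<^sub>v (Q *\<^sub>v v) = 0\<^sub>v n" using Qc by (simp add: mult_zero_vec_right)
      then show False using orth_inv_vec[OF Q v] False by simp
    qed
    then show ?thesis using False dv vnorm_orth[OF Q v] Qc v
      by (simp add: radial_def mult_mat_vec[OF Qc v])
  qed
qed

lemma sand_vec:
  fixes A W B :: "real mat"
  assumes A: "A \<in> carrier_mat n' n'" and W: "W \<in> carrier_mat n' n" and B: "orth_mat n B"
    and x: "x \<in> carrier_vec n" and b: "b \<in> carrier_vec n'"
  shows "(A * W * transpose_mat B) *\<^sub>v (B *\<^sub>v x) + A *\<^sub>v b = A *\<^sub>v (W *\<^sub>v x + b)"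
proof -
  have Bc: "B \<in> carrier_mat n n" using B by (auto simp: orth_mat_def)
  have Bt: "transpose_mat B \<in> carrier_mat n n" using Bc by simp
  have AW: "A * W \<in> carrier_mat n' n" using A W by (rule mult_carrier_mat)
  have Bx: "B *\<^sub>v x \<in> carrier_vec n" using Bc x by simp
  have "(A * W * transpose_mat B) *\<^sub>v (B *\<^sub>v x) = (A * W) *\<^sub>v (transpose_mat B *\<^sub>v (B *\<^sub>v x))"
    by (rule assoc_mult_mat_vec[OF AW Bt Bx])
  also have "\<dots> = (A * W) *\<^sub>v x" unfolding orth_inv_vec[OF B x] ..
  also have "\<dots> = A *\<^sub>v (W *\<^sub>v x)" by (rule assoc_mult_mat_vec[OF A W x])
  finally have 1: "(A * W * transpose_mat B) *\<^sub>v (B *\<^sub>v x) = A *\<^sub>v (W *\<^sub>v x)" .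
  have "A *\<^sub>v (W *\<^sub>v x + b) = A *\<^sub>v (W *\<^sub>v x) + A *\<^sub>v b"
    by (rule mult_add_distrib_mat_vec[OF A]) (use W x b in auto)
  then show ?thesis using 1 by simp
qed

lemma ff_carrier:
  assumes p: "p \<in> Param ns"
  shows "k \<le> nlayers ns \<Longrightarrow> x \<in> carrier_vec (ns ! k) \<Longrightarrow>
    ff h (Suc k) (drop k (fst p)) (drop k (snd p)) x \<in> carrier_vec (ns ! nlayers ns)"
proof (induction "nlayers ns - k" arbitrary: k x)
  case 0
  then have "k = nlayers ns" by simp
  then show ?case using 0 ParamD[OF p] by simp
next
  case (Suc m)
  then have k: "k < nlayers ns" by simp
  have dW: "drop k (fst p) = fst p ! k # drop (Suc k) (fst p)"
    by (rule Cons_nth_drop_Suc[symmetric]) (use k ParamD[OF p] in simp)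
  have db: "drop k (snd p) = snd p ! k # drop (Suc k) (snd p)"
    by (rule Cons_nth_drop_Suc[symmetric]) (use k ParamD[OF p] in simp)
  have "radial (h (Suc k)) (fst p ! k *\<^sub>v x + snd p ! k) \<in> carrier_vec (ns ! Suc k)"
    using ParamD(3)[OF p k] ParamD(4)[OF p k] Suc.prems by (intro radial_carrier) auto
  then show ?case unfolding dW db using Suc k by simp
qed

lemma ff_act:
  assumes Q: "orthE ns Q" and p: "p \<in> Param ns"
  shows "k \<le> nlayers ns \<Longrightarrow> x \<in> carrier_vec (ns ! k) \<Longrightarrow>
    ff h (Suc k) (drop k (fst (act ns Q p))) (drop k (snd (act ns Q p))) (Qext ns Q k *\<^sub>v x)
    = Qext ns Q (nlayers ns) *\<^sub>v ff h (Suc k) (drop k (fst p)) (drop k (snd p)) x"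
proof (induction "nlayers ns - k" arbitrary: k x)
  case 0
  then have "k = nlayers ns" by simp
  then show ?case using 0 ParamD[OF p] by (simp add: act_len)
next
  case (Suc m)
  then have k: "k < nlayers ns" by simp
  note ap = act_Param[OF Q p]
  have dW: "drop k (fst p) = fst p ! k # drop (Suc k) (fst p)"
    by (rule Cons_nth_drop_Suc[symmetric]) (use k ParamD[OF p] in simp)
  have db: "drop k (snd p) = snd p ! k # drop (Suc k) (snd p)"
    by (rule Cons_nth_drop_Suc[symmetric]) (use k ParamD[OF p] in simp)
  have dW': "drop k (fst (act ns Q p)) = fst (act ns Q p) ! k # drop (Suc k) (fst (act ns Q p))"
    by (rule Cons_nth_drop_Suc[symmetric]) (use k ParamD[OF ap] in simp)
  have db': "drop k (snd (act ns Q p)) = snd (act ns Q p) ! k # drop (Suc k) (snd (act ns Q p))"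
    by (rule Cons_nth_drop_Suc[symmetric]) (use k ParamD[OF ap] in simp)
  have oS: "orth_mat (ns ! Suc k) (Qext ns Q (Suc k))" and ok: "orth_mat (ns ! k) (Qext ns Q k)"
    using Q k by (auto simp: orthE_def)
  have cS: "Qext ns Q (Suc k) \<in> carrier_mat (ns ! Suc k) (ns ! Suc k)" using oS by (simp add: orth_mat_def)
  define y where "y = fst p ! k *\<^sub>v x + snd p ! k"
  have y: "y \<in> carrier_vec (ns ! Suc k)" using ParamD(3)[OF p k] ParamD(4)[OF p k] Suc.prems by (auto simp: y_def)
  have "fst (act ns Q p) ! k *\<^sub>v (Qext ns Q k *\<^sub>v x) + snd (act ns Q p) ! k = Qext ns Q (Suc k) *\<^sub>v y"
    unfolding act_nth[OF p k] y_def
    by (rule sand_vec[OF cS ParamD(3)[OF p k] ok Suc.prems(2) ParamD(4)[OF p k]])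
  then have "radial (h (Suc k)) (fst (act ns Q p) ! k *\<^sub>v (Qext ns Q k *\<^sub>v x) + snd (act ns Q p) ! k)
      = Qext ns Q (Suc k) *\<^sub>v radial (h (Suc k)) y"
    using radial_orth[OF oS y] by simp
  moreover have "ff h (Suc (Suc k)) (drop (Suc k) (fst (act ns Q p))) (drop (Suc k) (snd (act ns Q p)))
      (Qext ns Q (Suc k) *\<^sub>v radial (h (Suc k)) y) =
      Qext ns Q (nlayers ns) *\<^sub>v ff h (Suc (Suc k)) (drop (Suc k) (fst p)) (drop (Suc k) (snd p)) (radial (h (Suc k)) y)"
    using Suc.hyps(1)[of "Suc k"] Suc.hyps(2) k radial_carrier[OF y] by simp
  ultimately show ?case unfolding dW db dW' db' by (simp add: y_def)
qed

lemma feedforward_act: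
  assumes Q: "orthE ns Q" and p: "p \<in> Param ns" and x: "x \<in> carrier_vec (ns ! 0)"
  shows "feedforward h (act ns Q p) x = feedforward h p x"
proof -
  have "ff h 1 (fst (act ns Q p)) (snd (act ns Q p)) (Qext ns Q 0 *\<^sub>v x) =
        Qext ns Q (nlayers ns) *\<^sub>v ff h 1 (fst p) (snd p) x"
    using ff_act[OF Q p, of 0 x] x by simp
  moreover have "Qext ns Q 0 *\<^sub>v x = x" using x by (simp add: Qext_def)
  moreover have "ff h 1 (fst p) (snd p) x \<in> carrier_vec (ns ! nlayers ns)"
    using ff_carrier[OF p, of 0 x] x by simp
  ultimately show ?thesis unfolding feedforward_def by (simp add: Qext_def)
qed

lemma loss_act:
  assumes Q: "orthE ns Q" and p: "p \<in> Param ns" and D: "\<forall>(x, y) \<in> set D. x \<in> carrier_vec (ns ! 0)"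
  shows "loss h C D (act ns Q p) = loss h C D p"
  unfolding loss_def
  by (intro arg_cong[where f = sum_list] map_cong refl) (use D feedforward_act[OF Q p] in auto)

section \<open>Equivariance of gradient descent\<close>

lemma has_grad_act:
  assumes Q: "orthE ns Q" and x: "x \<in> Param ns"
    and inv: "\<And>z. z \<in> Param ns \<Longrightarrow> f (act ns Q z) = f z"
    and g: "has_grad f ns x g"
  shows "has_grad f ns (act ns Q x) (act ns Q g)"
proof -
  have gP: "g \<in> Param ns" using g by (simp add: has_grad_def)
  show ?thesis unfolding has_grad_def
  proof (intro conjI allI impI)
    show "act ns Q g \<in> Param ns" by (rule act_Param[OF Q gP])
    fix e :: real assume e: "e > 0"
    then obtain \<delta> where d: "\<delta> > 0" and b: "\<forall>q\<in>Param ns. pnorm q < \<delta> \<longrightarrow>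
        \<bar>f (padd x q) - f x - pinner g q\<bar> \<le> e * pnorm q"
      using g unfolding has_grad_def by blast
    show "\<exists>\<delta>>0. \<forall>q\<in>Param ns. pnorm q < \<delta> \<longrightarrow>
        \<bar>f (padd (act ns Q x) q) - f (act ns Q x) - pinner (act ns Q g) q\<bar> \<le> e * pnorm q"
    proof (intro exI[of _ \<delta>] conjI ballI impI d)
      fix q assume q: "q \<in> Param ns" and qd: "pnorm q < \<delta>"
      define q' where "q' = act_inv ns Q q"
      have q'P: "q' \<in> Param ns" unfolding q'_def by (rule act_inv_Param[OF Q q])
      have n: "pnorm q' = pnorm q" unfolding q'_def by (rule pnorm_act_inv[OF Q q])
      have "act ns Q (padd x q') = padd (act ns Q x) (act ns Q q')" by (rule act_padd[OF Q x q'P])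
      then have 1: "padd (act ns Q x) q = act ns Q (padd x q')" unfolding q'_def act_act_inv[OF Q q] by simp
      have 2: "f (padd (act ns Q x) q) = f (padd x q')" unfolding 1 by (rule inv[OF padd_Param[OF x q'P]])
      have 3: "pinner (act ns Q g) q = pinner g q'" unfolding q'_def by (rule pinner_act[OF Q gP q])
      show "\<bar>f (padd (act ns Q x) q) - f (act ns Q x) - pinner (act ns Q g) q\<bar> \<le> e * pnorm q"
        unfolding 2 3 inv[OF x] using b q'P qd n by metis
    qed
  qed
qed

lemma gd_act:
  assumes df: "differentiable_on_Param f ns" and Q: "orthE ns Q" and x: "x \<in> Param ns"
    and inv: "\<And>z. z \<in> Param ns \<Longrightarrow> f (act ns Q z) = f z"
  shows "gd_step f \<eta> ns (act ns Q x) = act ns Q (gd_step f \<eta> ns x)"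
proof -
  have g: "has_grad f ns x (grad f ns x)" by (rule grad_has[OF df x])
  have gP: "grad f ns x \<in> Param ns" by (rule grad_Param[OF df x])
  have "grad f ns (act ns Q x) = act ns Q (grad f ns x)"
    by (rule grad_eq[OF has_grad_act[OF Q x inv g]])
  then show ?thesis unfolding gd_step_def
    using act_psub[OF Q x psmult_Param[OF gP]] act_psmult[OF Q gP] by simp
qed

lemma gd_iter_Param:
  assumes df: "differentiable_on_Param f ns" and x: "x \<in> Param ns"
  shows "(gd_step f \<eta> ns ^^ k) x \<in> Param ns"
  by (induction k) (auto simp: x gd_step_Param[OF df])

lemma gd_iter_act:
  assumes df: "differentiable_on_Param f ns" and Q: "orthE ns Q" and x: "x \<in> Param ns"
    and inv: "\<And>z. z \<in> Param ns \<Longrightarrow> f (act ns Q z) = f z"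
  shows "(gd_step f \<eta> ns ^^ k) (act ns Q x) = act ns Q ((gd_step f \<eta> ns ^^ k) x)"
proof (induction k)
  case (Suc k)
  then show ?case using gd_act[OF df Q gd_iter_Param[OF df x] inv, of \<eta> k] by simp
qed simp

section \<open>Reduced widths and compatible pairs of parameters\<close>

lemma rw_le: "rw ns i \<le> ns ! i"
  by (cases i) auto

lemma red_len: "length (red_widths ns) = length ns"
  by (simp add: red_widths_def)

lemma nlayers_red: "nlayers (red_widths ns) = nlayers ns"
  by (simp add: nlayers_def red_len)

lemma red_nth: "i \<le> nlayers ns \<Longrightarrow> length ns \<ge> 2 \<Longrightarrow>
    red_widths ns ! i = (if i = nlayers ns then ns ! i else rw ns i)"
  by (simp add: red_widths_def nlayers_def)

lemma red_le: "i \<le> nlayers ns \<Longrightarrow> length ns \<ge> 2 \<Longrightarrow> red_widths ns ! i \<le> ns ! i"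
  using rw_le by (simp add: red_nth)

lemma red_0: "length ns \<ge> 2 \<Longrightarrow> red_widths ns ! 0 = ns ! 0"
  by (simp add: red_nth)

lemma red_L: "length ns \<ge> 2 \<Longrightarrow> red_widths ns ! nlayers ns = ns ! nlayers ns"
  by (simp add: red_nth)

definition good :: "nat list \<Rightarrow> param \<Rightarrow> param \<Rightarrow> bool" where
  "good ns P r \<longleftrightarrow> P \<in> Param ns \<and> r \<in> Param (red_widths ns) \<and>
    (\<forall>i < nlayers ns. \<forall>a < ns ! Suc i. \<forall>c < red_widths ns ! i.
       fst P ! i $$ (a, c) = (if a < red_widths ns ! Suc i then fst r ! i $$ (a, c) else 0)) \<and>
    (\<forall>i < nlayers ns. \<forall>a < ns ! Suc i.
       snd P ! i $ a = (if a < red_widths ns ! Suc i then snd r ! i $ a else 0))"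

definition pad :: "nat \<Rightarrow> real vec \<Rightarrow> real vec" where
  "pad n x = vec n (\<lambda>j. if j < dim_vec x then x $ j else 0)"

lemma sum_shrink:
  fixes f :: "nat \<Rightarrow> real"
  assumes "m \<le> n" "\<And>c. m \<le> c \<Longrightarrow> c < n \<Longrightarrow> f c = 0"
  shows "sum f {0..<n} = sum f {0..<m}"
  by (rule sum.mono_neutral_right) (use assms in auto)

lemma pad_id: "x \<in> carrier_vec n \<Longrightarrow> pad n x = x"
  unfolding pad_def by (intro eq_vecI) auto

lemma vnorm_pad:
  assumes "dim_vec x \<le> n"
  shows "vnorm (pad n x) = vnorm x"
proof -
  have "pad n x \<bullet> pad n x = (\<Sum>j\<in>{0..<n}. pad n x $ j * pad n x $ j)" by (simp add: scalar_prod_def pad_def)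
  also have "\<dots> = (\<Sum>j\<in>{0..<dim_vec x}. pad n x $ j * pad n x $ j)"
    by (rule sum_shrink) (use assms in \<open>auto simp: pad_def\<close>)
  also have "\<dots> = x \<bullet> x" using assms by (auto simp: scalar_prod_def pad_def intro!: sum.cong)
  finally show ?thesis by (simp add: vnorm_def)
qed

lemma pad_zero_iff:
  assumes "dim_vec x \<le> n"
  shows "pad n x = 0\<^sub>v n \<longleftrightarrow> x = 0\<^sub>v (dim_vec x)"
proof
  assume a: "pad n x = 0\<^sub>v n"
  show "x = 0\<^sub>v (dim_vec x)"
  proof (rule eq_vecI)
    fix j assume j: "j < dim_vec (0\<^sub>v (dim_vec x))"
    have "pad n x $ j = 0" using a j assms by simp
    then show "x $ j = 0\<^sub>v (dim_vec x) $ j" using j assms by (simp add: pad_def)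
  qed simp
next
  assume "x = 0\<^sub>v (dim_vec x)"
  then show "pad n x = 0\<^sub>v n" unfolding pad_def by (intro eq_vecI) (auto, metis index_zero_vec(1))
qed

lemma radial_pad:
  assumes "dim_vec x \<le> n"
  shows "radial h (pad n x) = pad n (radial h x)"
proof (cases "x = 0\<^sub>v (dim_vec x)")
  case True
  then have "pad n x = 0\<^sub>v n" using pad_zero_iff[OF assms] by simp
  then show ?thesis using True by (simp add: radial_def)
next
  case False
  then have "pad n x \<noteq> 0\<^sub>v n" using pad_zero_iff[OF assms] by simp
  moreover have "dim_vec (pad n x) = n" by (simp add: pad_def)
  ultimately show ?thesis using False vnorm_pad[OF assms]
    by (simp add: radial_def) (intro eq_vecI, auto simp: pad_def)
qed

lemma good_layer:
  assumes g: "good ns P r" and L2: "length ns \<ge> 2" and k: "k < nlayers ns"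
    and x: "x \<in> carrier_vec (red_widths ns ! k)"
  shows "fst P ! k *\<^sub>v pad (ns ! k) x + snd P ! k = pad (ns ! Suc k) (fst r ! k *\<^sub>v x + snd r ! k)"
proof -
  note nr = red_le[OF _ L2]
  have P: "P \<in> Param ns" and r: "r \<in> Param (red_widths ns)" using g by (auto simp: good_def)
  have k': "k < nlayers (red_widths ns)" using k by (simp add: nlayers_red)
  have WP: "fst P ! k \<in> carrier_mat (ns ! Suc k) (ns ! k)" and bP: "snd P ! k \<in> carrier_vec (ns ! Suc k)"
    using ParamD[OF P] k by auto
  have Wr: "fst r ! k \<in> carrier_mat (red_widths ns ! Suc k) (red_widths ns ! k)"
    and br: "snd r ! k \<in> carrier_vec (red_widths ns ! Suc k)"
    using ParamD[OF r] k' by auto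
  have le1: "red_widths ns ! k \<le> ns ! k" and le2: "red_widths ns ! Suc k \<le> ns ! Suc k" using nr k by auto
  show ?thesis
  proof (rule eq_vecI)
    fix a assume "a < dim_vec (pad (ns ! Suc k) (fst r ! k *\<^sub>v x + snd r ! k))"
    then have a: "a < ns ! Suc k" by (simp add: pad_def)
    have "(fst P ! k *\<^sub>v pad (ns ! k) x) $ a = (\<Sum>c\<in>{0..<ns ! k}. fst P ! k $$ (a, c) * pad (ns ! k) x $ c)"
      using WP a by (simp add: scalar_prod_def pad_def)
    also have "\<dots> = (\<Sum>c\<in>{0..<red_widths ns ! k}. fst P ! k $$ (a, c) * pad (ns ! k) x $ c)"
      by (rule sum_shrink) (use le1 x in \<open>auto simp: pad_def\<close>)
    also have "\<dots> = (if a < red_widths ns ! Suc k then (fst r ! k *\<^sub>v x) $ a else 0)"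
      using g k a x le1 Wr unfolding good_def by (auto simp: scalar_prod_def pad_def intro!: sum.cong)
    finally have 1: "(fst P ! k *\<^sub>v pad (ns ! k) x) $ a = (if a < red_widths ns ! Suc k then (fst r ! k *\<^sub>v x) $ a else 0)" .
    have 2: "snd P ! k $ a = (if a < red_widths ns ! Suc k then snd r ! k $ a else 0)"
      using g k a unfolding good_def by auto
    show "(fst P ! k *\<^sub>v pad (ns ! k) x + snd P ! k) $ a = pad (ns ! Suc k) (fst r ! k *\<^sub>v x + snd r ! k) $ a"
      using 1 2 a WP bP Wr br by (simp add: pad_def)
  qed (use WP bP in \<open>simp add: pad_def\<close>)
qed

lemma ff_good:
  assumes g: "good ns P r" and L2: "length ns \<ge> 2"
  shows "k \<le> nlayers ns \<Longrightarrow> x \<in> carrier_vec (red_widths ns ! k) \<Longrightarrow>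
    ff h (Suc k) (drop k (fst P)) (drop k (snd P)) (pad (ns ! k) x)
    = pad (ns ! nlayers ns) (ff h (Suc k) (drop k (fst r)) (drop k (snd r)) x)"
proof (induction "nlayers ns - k" arbitrary: k x)
  case 0
  have P: "P \<in> Param ns" and r: "r \<in> Param (red_widths ns)" using g by (auto simp: good_def)
  from 0 have "k = nlayers ns" by simp
  then show ?case using 0 ParamD[OF P] ParamD[OF r] by (simp add: nlayers_red)
next
  case (Suc m)
  then have k: "k < nlayers ns" by simp
  have P: "P \<in> Param ns" and r: "r \<in> Param (red_widths ns)" using g by (auto simp: good_def)
  have k': "k < nlayers (red_widths ns)" using k by (simp add: nlayers_red)
  have dW: "drop k (fst P) = fst P ! k # drop (Suc k) (fst P)"
    by (rule Cons_nth_drop_Suc[symmetric]) (use k ParamD[OF P] in simp)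
  have db: "drop k (snd P) = snd P ! k # drop (Suc k) (snd P)"
    by (rule Cons_nth_drop_Suc[symmetric]) (use k ParamD[OF P] in simp)
  have dW': "drop k (fst r) = fst r ! k # drop (Suc k) (fst r)"
    by (rule Cons_nth_drop_Suc[symmetric]) (use k' ParamD[OF r] in simp)
  have db': "drop k (snd r) = snd r ! k # drop (Suc k) (snd r)"
    by (rule Cons_nth_drop_Suc[symmetric]) (use k' ParamD[OF r] in simp)
  define y where "y = fst r ! k *\<^sub>v x + snd r ! k"
  have y: "y \<in> carrier_vec (red_widths ns ! Suc k)"
    using ParamD(3)[OF r k'] ParamD(4)[OF r k'] Suc.prems by (auto simp: y_def)
  have le2: "red_widths ns ! Suc k \<le> ns ! Suc k" using red_le[OF _ L2] k by auto
  have "radial (h (Suc k)) (fst P ! k *\<^sub>v pad (ns ! k) x + snd P ! k) = pad (ns ! Suc k) (radial (h (Suc k)) y)"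
    unfolding good_layer[OF g L2 k Suc.prems(2)] y_def[symmetric]
    by (rule radial_pad) (use y le2 in auto)
  moreover have "ff h (Suc (Suc k)) (drop (Suc k) (fst P)) (drop (Suc k) (snd P)) (pad (ns ! Suc k) (radial (h (Suc k)) y))
     = pad (ns ! nlayers ns) (ff h (Suc (Suc k)) (drop (Suc k) (fst r)) (drop (Suc k) (snd r)) (radial (h (Suc k)) y))"
    using Suc.hyps(1)[of "Suc k"] Suc.hyps(2) k radial_carrier[OF y] by simp
  ultimately show ?case unfolding dW db dW' db' by (simp add: y_def)
qed

lemma feedforward_good:
  assumes g: "good ns P r" and L2: "length ns \<ge> 2" and x: "x \<in> carrier_vec (ns ! 0)"
  shows "feedforward h P x = feedforward h r x"
proof -
  have r: "r \<in> Param (red_widths ns)" using g by (auto simp: good_def)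
  have x': "x \<in> carrier_vec (red_widths ns ! 0)" using x red_0[OF L2] by simp
  have "ff h 1 (fst P) (snd P) (pad (ns ! 0) x) = pad (ns ! nlayers ns) (ff h 1 (fst r) (snd r) x)"
    using ff_good[OF g L2, of 0 x] x' by simp
  moreover have "pad (ns ! 0) x = x" using x by (rule pad_id)
  moreover have "ff h 1 (fst r) (snd r) x \<in> carrier_vec (ns ! nlayers ns)"
    using ff_carrier[OF r, of 0 x] x' red_L[OF L2] by (simp add: nlayers_red)
  ultimately show ?thesis unfolding feedforward_def by (simp add: pad_id)
qed

lemma loss_good:
  assumes g: "good ns P r" and L2: "length ns \<ge> 2" and D: "\<forall>(x, y) \<in> set D. x \<in> carrier_vec (ns ! 0)"
  shows "loss h C D P = loss h C D r"
  unfolding loss_def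
  by (intro arg_cong[where f = sum_list] map_cong refl) (use D feedforward_good[OF g L2] in auto)

lemma good_padd:
  assumes g1: "good ns P r" and g2: "good ns u u'" and L2: "length ns \<ge> 2"
  shows "good ns (padd P u) (padd r u')"
proof -
  have P: "P \<in> Param ns" "u \<in> Param ns" and r: "r \<in> Param (red_widths ns)" "u' \<in> Param (red_widths ns)"
    using g1 g2 by (auto simp: good_def)
  show ?thesis unfolding good_def
  proof (intro conjI allI impI)
    show "padd P u \<in> Param ns" by (rule padd_Param[OF P])
    show "padd r u' \<in> Param (red_widths ns)" by (rule padd_Param[OF r])
  next
    fix i a c assume i: "i < nlayers ns" and a: "a < ns ! Suc i" and c: "c < red_widths ns ! i"
    have c': "c < ns ! i" using c red_le[OF _ L2, of i] i by simp
    have i': "i < nlayers (red_widths ns)" using i by (simp add: nlayers_red)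
    show "fst (padd P u) ! i $$ (a, c) = (if a < red_widths ns ! Suc i then fst (padd r u') ! i $$ (a, c) else 0)"
      using g1 g2 i a c unfolding padd_entries[OF P i a c'] good_def
      by (auto simp: padd_entries[OF r i'] )
  next
    fix i a assume i: "i < nlayers ns" and a: "a < ns ! Suc i"
    have i': "i < nlayers (red_widths ns)" using i by (simp add: nlayers_red)
    show "snd (padd P u) ! i $ a = (if a < red_widths ns ! Suc i then snd (padd r u') ! i $ a else 0)"
      using g1 g2 i a ParamD(4)[OF P(1) i] ParamD(4)[OF P(2) i] ParamD(4)[OF r(1) i'] ParamD(4)[OF r(2) i']
      unfolding padd_nth[OF P i] padd_nth[OF r i'] good_def
      by auto
  qed
qed

lemma good_psmult:
  assumes g: "good ns u u'" and L2: "length ns \<ge> 2"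
  shows "good ns (psmult t u) (psmult t u')"
proof -
  have P: "u \<in> Param ns" and r: "u' \<in> Param (red_widths ns)"
    using g by (auto simp: good_def)
  show ?thesis unfolding good_def
  proof (intro conjI allI impI)
    show "psmult t u \<in> Param ns" by (rule psmult_Param[OF P])
    show "psmult t u' \<in> Param (red_widths ns)" by (rule psmult_Param[OF r])
  next
    fix i a c assume i: "i < nlayers ns" and a: "a < ns ! Suc i" and c: "c < red_widths ns ! i"
    have c': "c < ns ! i" using c red_le[OF _ L2, of i] i by simp
    have i': "i < nlayers (red_widths ns)" using i by (simp add: nlayers_red)
    show "fst (psmult t u) ! i $$ (a, c) = (if a < red_widths ns ! Suc i then fst (psmult t u') ! i $$ (a, c) else 0)"
      using g i a c c' ParamD(3)[OF P i] ParamD(3)[OF r i'] unfolding psmult_nth[OF P i] psmult_nth[OF r i'] good_def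
      by auto
  next
    fix i a assume i: "i < nlayers ns" and a: "a < ns ! Suc i"
    have i': "i < nlayers (red_widths ns)" using i by (simp add: nlayers_red)
    show "snd (psmult t u) ! i $ a = (if a < red_widths ns ! Suc i then snd (psmult t u') ! i $ a else 0)"
      using g i a ParamD(4)[OF P i] ParamD(4)[OF r i']
      unfolding psmult_nth[OF P i] psmult_nth[OF r i'] good_def
      by auto
  qed
qed

lemma good_emat:
  assumes L2: "length ns \<ge> 2" and i: "i < nlayers ns" and a: "a < red_widths ns ! Suc i" and c: "c < red_widths ns ! i"
  shows "good ns (emat ns i a c) (emat (red_widths ns) i a c)"
  unfolding good_def
proof (intro conjI allI impI emat_Param)
  fix j x y assume j: "j < nlayers ns" and x: "x < ns ! Suc j" and y: "y < red_widths ns ! j"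
  have y': "y < ns ! j" using y red_le[OF _ L2, of j] j by simp
  show "fst (emat ns i a c) ! j $$ (x, y) = (if x < red_widths ns ! Suc j then fst (emat (red_widths ns) i a c) ! j $$ (x, y) else 0)"
    using j x y y' a by (auto simp: emat_def nlayers_red)
next
  fix j x assume j: "j < nlayers ns" and x: "x < ns ! Suc j"
  show "snd (emat ns i a c) ! j $ x = (if x < red_widths ns ! Suc j then snd (emat (red_widths ns) i a c) ! j $ x else 0)"
    using j x by (auto simp: emat_def nlayers_red)
qed

lemma good_evec:
  assumes L2: "length ns \<ge> 2" and i: "i < nlayers ns" and a: "a < red_widths ns ! Suc i"
  shows "good ns (evec ns i a) (evec (red_widths ns) i a)"
  unfolding good_def
proof (intro conjI allI impI evec_Param)
  fix j x y assume j: "j < nlayers ns" and x: "x < ns ! Suc j" and y: "y < red_widths ns ! j"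
  have y': "y < ns ! j" using y red_le[OF _ L2, of j] j by simp
  show "fst (evec ns i a) ! j $$ (x, y) = (if x < red_widths ns ! Suc j then fst (evec (red_widths ns) i a) ! j $$ (x, y) else 0)"
    using j x y y' a by (auto simp: evec_def nlayers_red)
next
  fix j x assume j: "j < nlayers ns" and x: "x < ns ! Suc j"
  show "snd (evec ns i a) ! j $ x = (if x < red_widths ns ! Suc j then snd (evec (red_widths ns) i a) ! j $ x else 0)"
    using j x a by (auto simp: evec_def nlayers_red)
qed

definition pzero :: "nat list \<Rightarrow> param" where
  "pzero ns = (map (\<lambda>j. 0\<^sub>m (ns ! Suc j) (ns ! j)) [0..<nlayers ns], map (\<lambda>j. 0\<^sub>v (ns ! Suc j)) [0..<nlayers ns])"

lemma pzero_Param: "pzero ns \<in> Param ns"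
  by (rule ParamI) (auto simp: pzero_def)

lemma pinner_pzero:
  assumes g: "g \<in> Param ns"
  shows "pinner g (pzero ns) = 0"
proof -
  have "(\<Sum>j<length (fst g). frob (fst g ! j) (fst (pzero ns) ! j)) = 0"
  proof (intro sum.neutral ballI)
    fix j assume "j \<in> {..<length (fst g)}"
    then have j: "j < nlayers ns" using ParamD[OF g] by auto
    show "frob (fst g ! j) (fst (pzero ns) ! j) = 0"
      using ParamD(3)[OF g j] j by (auto simp: frob_def pzero_def intro!: sum.neutral)
  qed
  moreover have "(\<Sum>j<length (snd g). vin (snd g ! j) (snd (pzero ns) ! j)) = 0"
  proof (intro sum.neutral ballI)
    fix j assume "j \<in> {..<length (snd g)}"
    then have j: "j < nlayers ns" using ParamD[OF g] by auto
    show "vin (snd g ! j) (snd (pzero ns) ! j) = 0"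
      using ParamD(4)[OF g j] j by (auto simp: vin_def pzero_def intro!: sum.neutral)
  qed
  ultimately show ?thesis unfolding pinner_alt by simp
qed

lemma good_emat0:
  assumes L2: "length ns \<ge> 2" and i: "i < nlayers ns" and c: "red_widths ns ! i \<le> c"
  shows "good ns (emat ns i a c) (pzero (red_widths ns))"
  unfolding good_def
proof (intro conjI allI impI emat_Param pzero_Param)
  fix j x y assume j: "j < nlayers ns" and x: "x < ns ! Suc j" and y: "y < red_widths ns ! j"
  have y': "y < ns ! j" using y red_le[OF _ L2, of j] j by simp
  show "fst (emat ns i a c) ! j $$ (x, y) = (if x < red_widths ns ! Suc j then fst (pzero (red_widths ns)) ! j $$ (x, y) else 0)"
    using j x y y' c by (auto simp: emat_def pzero_def nlayers_red)
next
  fix j x assume j: "j < nlayers ns" and x: "x < ns ! Suc j"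
  show "snd (emat ns i a c) ! j $ x = (if x < red_widths ns ! Suc j then snd (pzero (red_widths ns)) ! j $ x else 0)"
    using j x by (auto simp: emat_def pzero_def nlayers_red)
qed

lemma grad_good:
  assumes L2: "length ns \<ge> 2" and g: "good ns P r"
    and hg: "has_grad f ns P G" and hg': "has_grad f' (red_widths ns) r G'"
    and fg: "\<forall>P' r'. good ns P' r' \<longrightarrow> f P' = f' r'"
  shows "\<And>i a c. i < nlayers ns \<Longrightarrow> a < red_widths ns ! Suc i \<Longrightarrow> c < red_widths ns ! i \<Longrightarrow>
           fst G ! i $$ (a, c) = fst G' ! i $$ (a, c)"
    and "\<And>i a c. i < nlayers ns \<Longrightarrow> a < ns ! Suc i \<Longrightarrow> red_widths ns ! i \<le> c \<Longrightarrow> c < ns ! i \<Longrightarrow>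
           fst G ! i $$ (a, c) = 0"
    and "\<And>i a. i < nlayers ns \<Longrightarrow> a < red_widths ns ! Suc i \<Longrightarrow> snd G ! i $ a = snd G' ! i $ a"
proof -
  have GP: "G \<in> Param ns" "G' \<in> Param (red_widths ns)" using hg hg' by (auto simp: has_grad_def)
  have f0: "f P = f' r" using fg g by blast
  have key: "pinner G u = pinner G' u'" if gu: "good ns u u'" for u u'
  proof -
    have uP: "u \<in> Param ns" "u' \<in> Param (red_widths ns)" using gu by (auto simp: good_def)
    show ?thesis
      by (rule dir_deriv_eq[OF hg hg' uP f0])
        (intro fg[rule_format] good_padd[OF g _ L2] good_psmult[OF gu L2])
  qed
  fix i a c assume i: "i < nlayers ns"
  have i': "i < nlayers (red_widths ns)" using i by (simp add: nlayers_red)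
  have le: "red_widths ns ! i \<le> ns ! i" "red_widths ns ! Suc i \<le> ns ! Suc i" using red_le[OF _ L2] i by auto
  {
    assume a: "a < red_widths ns ! Suc i" and c: "c < red_widths ns ! i"
    have "pinner G (emat ns i a c) = pinner G' (emat (red_widths ns) i a c)"
      by (rule key[OF good_emat[OF L2 i a c]])
    then show "fst G ! i $$ (a, c) = fst G' ! i $$ (a, c)"
      using pinner_emat[OF GP(1) i, of a c] pinner_emat[OF GP(2) i' a c] a c le by simp
  }
  {
    assume a: "a < ns ! Suc i" and c: "red_widths ns ! i \<le> c" "c < ns ! i"
    have "pinner G (emat ns i a c) = pinner G' (pzero (red_widths ns))"
      by (rule key[OF good_emat0[OF L2 i c(1)]])
    then show "fst G ! i $$ (a, c) = 0"
      using pinner_emat[OF GP(1) i a c(2)] pinner_pzero[OF GP(2)] by simp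
  }
  {
    assume a: "a < red_widths ns ! Suc i"
    have "pinner G (evec ns i a) = pinner G' (evec (red_widths ns) i a)"
      by (rule key[OF good_evec[OF L2 i a]])
    then show "snd G ! i $ a = snd G' ! i $ a"
      using pinner_evec[OF GP(1) i, of a] pinner_evec[OF GP(2) i' a] a le by simp
  }
qed

lemma embed_Param: "embed ns r \<in> Param ns"
  by (rule ParamI) (auto simp: embed_def Let_def)

lemma embed_W:
  assumes "i < nlayers ns" "a < ns ! Suc i" "c < ns ! i"
  shows "fst (embed ns r) ! i $$ (a, c) = (if a < red_widths ns ! Suc i \<and> c < red_widths ns ! i then fst r ! i $$ (a, c) else 0)"
  using assms by (simp add: embed_def Let_def)

lemma embed_b:
  assumes "i < nlayers ns" "a < ns ! Suc i"
  shows "snd (embed ns r) ! i $ a = (if a < red_widths ns ! Suc i then snd r ! i $ a else 0)"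
  using assms by (simp add: embed_def Let_def)

lemma proj_nth:
  assumes x: "x \<in> Param ns" and i: "i < nlayers ns"
  shows "fst (proj ns x) ! i = mat (ns ! Suc i) (ns ! i) (\<lambda>(r, c).
            if red_widths ns ! Suc i \<le> r \<and> c < red_widths ns ! i then 0 else fst x ! i $$ (r, c))"
    "snd (proj ns x) ! i = vec (ns ! Suc i) (\<lambda>r. if red_widths ns ! Suc i \<le> r then 0 else snd x ! i $ r)"
proof -
  have u: "[0..<length (fst x)] ! i = i" "[0..<length (snd x)] ! i = i" using ParamD[OF x] i by auto
  have l: "i < length [0..<length (fst x)]" "i < length [0..<length (snd x)]" using ParamD[OF x] i by auto
  show "fst (proj ns x) ! i = mat (ns ! Suc i) (ns ! i) (\<lambda>(r, c).
            if red_widths ns ! Suc i \<le> r \<and> c < red_widths ns ! i then 0 else fst x ! i $$ (r, c))"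
    unfolding proj_def Let_def fst_conv nth_map[OF l(1)] u using ParamD(3)[OF x i] by auto
  show "snd (proj ns x) ! i = vec (ns ! Suc i) (\<lambda>r. if red_widths ns ! Suc i \<le> r then 0 else snd x ! i $ r)"
    unfolding proj_def Let_def snd_conv nth_map[OF l(2)] u using ParamD(4)[OF x i] by auto
qed

lemma proj_Param: assumes x: "x \<in> Param ns" shows "proj ns x \<in> Param ns"
proof (rule ParamI)
  fix i assume i: "i < nlayers ns"
  show "fst (proj ns x) ! i \<in> carrier_mat (ns ! Suc i) (ns ! i)"
    unfolding proj_nth[OF x i] by simp
  show "snd (proj ns x) ! i \<in> carrier_vec (ns ! Suc i)"
    unfolding proj_nth[OF x i] by simp
qed (use ParamD[OF x] in \<open>auto simp: proj_def Let_def\<close>)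

lemma proj_W:
  assumes x: "x \<in> Param ns" and "i < nlayers ns" "a < ns ! Suc i" "c < ns ! i"
  shows "fst (proj ns x) ! i $$ (a, c) = (if red_widths ns ! Suc i \<le> a \<and> c < red_widths ns ! i then 0 else fst x ! i $$ (a, c))"
  using assms unfolding proj_nth[OF x assms(2)] by simp

lemma proj_b:
  assumes x: "x \<in> Param ns" and "i < nlayers ns" "a < ns ! Suc i"
  shows "snd (proj ns x) ! i $ a = (if red_widths ns ! Suc i \<le> a then 0 else snd x ! i $ a)"
  using assms unfolding proj_nth[OF x assms(2)] by simp

lemma psub_W:
  assumes "p \<in> Param ns" "q \<in> Param ns" "i < nlayers ns" "a < ns ! Suc i" "c < ns ! i"
  shows "fst (psub p q) ! i $$ (a, c) = fst p ! i $$ (a, c) - fst q ! i $$ (a, c)"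
  using assms ParamD(3)[OF assms(1) assms(3)] ParamD(3)[OF assms(2) assms(3)] by (simp add: psub_nth)

lemma psmult_W:
  assumes "p \<in> Param ns" "i < nlayers ns" "a < ns ! Suc i" "c < ns ! i"
  shows "fst (psmult t p) ! i $$ (a, c) = t * fst p ! i $$ (a, c)"
  using assms ParamD(3)[OF assms(1) assms(2)] by (simp add: psmult_nth)

lemma padd_b:
  assumes "p \<in> Param ns" "q \<in> Param ns" "i < nlayers ns" "a < ns ! Suc i"
  shows "snd (padd p q) ! i $ a = snd p ! i $ a + snd q ! i $ a"
  using assms ParamD(4)[OF assms(1) assms(3)] ParamD(4)[OF assms(2) assms(3)] by (simp add: padd_nth)

lemma psub_b:
  assumes "p \<in> Param ns" "q \<in> Param ns" "i < nlayers ns" "a < ns ! Suc i"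
  shows "snd (psub p q) ! i $ a = snd p ! i $ a - snd q ! i $ a"
  using assms ParamD(4)[OF assms(1) assms(3)] ParamD(4)[OF assms(2) assms(3)] by (simp add: psub_nth)

lemma psmult_b:
  assumes "p \<in> Param ns" "i < nlayers ns" "a < ns ! Suc i"
  shows "snd (psmult t p) ! i $ a = t * snd p ! i $ a"
  using assms ParamD(4)[OF assms(1) assms(2)] by (simp add: psmult_nth)

lemma pgd_step_good:
  assumes L2: "length ns \<ge> 2"
    and D: "\<forall>(x, y) \<in> set D. x \<in> carrier_vec (ns ! 0)"
    and df: "differentiable_on_Param (loss h C D) ns"
    and dfr: "differentiable_on_Param (loss h C D) (red_widths ns)"
    and A0: "good ns A0 pr"
    and r: "r \<in> Param (red_widths ns)"
  defines "U \<equiv> psub A0 (embed ns pr)"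
  shows "good ns (padd (embed ns r) U) r"
    and "pgd_step (loss h C D) \<eta> ns (padd (embed ns r) U)
         = padd (embed ns (gd_step (loss h C D) \<eta> (red_widths ns) r)) U"
proof -
  let ?nr = "red_widths ns"
  let ?f = "loss h C D"
  have A0P: "A0 \<in> Param ns" and prP: "pr \<in> Param ?nr" using A0 by (auto simp: good_def)
  have UP: "U \<in> Param ns" unfolding U_def by (rule psub_Param[OF A0P embed_Param])
  have EP: "embed ns r \<in> Param ns" by (rule embed_Param)
  define P where "P = padd (embed ns r) U"
  have PP: "P \<in> Param ns" unfolding P_def by (rule padd_Param[OF EP UP])
  have UW: "fst U ! i $$ (a, c) = 0" if i: "i < nlayers ns" and a: "a < ns ! Suc i" and c: "c < ?nr ! i" for i a c
  proof -
    have c': "c < ns ! i" using c red_le[OF _ L2, of i] i by simp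
    show ?thesis using A0 i a c
      unfolding U_def psub_W[OF A0P embed_Param i a c'] embed_W[OF i a c'] good_def by auto
  qed
  have Ub: "snd U ! i $ a = 0" if i: "i < nlayers ns" and a: "a < ns ! Suc i" for i a
    using A0 i a unfolding U_def psub_b[OF A0P embed_Param i a] embed_b[OF i a] good_def by auto
  show gP: "good ns (padd (embed ns r) U) r"
    unfolding good_def
  proof (intro conjI allI impI padd_Param[OF EP UP] r)
    fix i a c assume i: "i < nlayers ns" and a: "a < ns ! Suc i" and c: "c < ?nr ! i"
    have c': "c < ns ! i" using c red_le[OF _ L2, of i] i by simp
    show "fst (padd (embed ns r) U) ! i $$ (a, c) = (if a < ?nr ! Suc i then fst r ! i $$ (a, c) else 0)"
      unfolding padd_entries[OF EP UP i a c'] embed_W[OF i a c'] UW[OF i a c] using c by simp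
  next
    fix i a assume i: "i < nlayers ns" and a: "a < ns ! Suc i"
    show "snd (padd (embed ns r) U) ! i $ a = (if a < ?nr ! Suc i then snd r ! i $ a else 0)"
      unfolding padd_b[OF EP UP i a] embed_b[OF i a] Ub[OF i a] by simp
  qed
  have fg: "\<forall>P' r'. good ns P' r' \<longrightarrow> ?f P' = ?f r'"
    using loss_good[OF _ L2 D] by blast
  define G where "G = grad ?f ns P"
  define G' where "G' = grad ?f ?nr r"
  have hg: "has_grad ?f ns P G" unfolding G_def by (rule grad_has[OF df PP])
  have hg': "has_grad ?f ?nr r G'" unfolding G'_def by (rule grad_has[OF dfr r])
  have GP: "G \<in> Param ns" "G' \<in> Param ?nr" using hg hg' by (auto simp: has_grad_def)
  have gP': "good ns P r" using gP by (simp add: P_def)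
  note GG = grad_good[OF L2 gP' hg hg' fg]
  have r'P: "psub r (psmult \<eta> G') \<in> Param ?nr" by (rule psub_Param[OF r psmult_Param[OF GP(2)]])
  have XP: "psub P (psmult \<eta> G) \<in> Param ns" by (rule psub_Param[OF PP psmult_Param[OF GP(1)]])
  have "proj ns (psub P (psmult \<eta> G)) = padd (embed ns (psub r (psmult \<eta> G'))) U"
  proof (rule param_eqI[OF proj_Param[OF XP] padd_Param[OF embed_Param UP]])
    fix i a c assume i: "i < nlayers ns" and a: "a < ns ! Suc i" and c: "c < ns ! i"
    have i': "i < nlayers ?nr" using i by (simp add: nlayers_red)
    have PW: "fst P ! i $$ (a, c) = fst (embed ns r) ! i $$ (a, c) + fst U ! i $$ (a, c)"
      unfolding P_def by (rule padd_entries[OF EP UP i a c])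
    show "fst (proj ns (psub P (psmult \<eta> G))) ! i $$ (a, c) = fst (padd (embed ns (psub r (psmult \<eta> G'))) U) ! i $$ (a, c)"
    proof (cases "c < ?nr ! i")
      case True
      show ?thesis
      proof (cases "a < ?nr ! Suc i")
        case True2: True
        show ?thesis
          unfolding proj_W[OF XP i a c] padd_entries[OF embed_Param UP i a c] embed_W[OF i a c]
            psub_W[OF PP psmult_Param[OF GP(1)] i a c] psmult_W[OF GP(1) i a c] PW embed_W[OF i a c]
            psub_W[OF r psmult_Param[OF GP(2)] i' True2 True] psmult_W[OF GP(2) i' True2 True]
            UW[OF i a True] GG(1)[OF i True2 True]
          using True True2 by simp
      next
        case False
        show ?thesis
          unfolding proj_W[OF XP i a c] padd_entries[OF embed_Param UP i a c] embed_W[OF i a c]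
            UW[OF i a True]
          using True False by simp
      qed
    next
      case False
      show ?thesis
        unfolding proj_W[OF XP i a c] padd_entries[OF embed_Param UP i a c] embed_W[OF i a c]
          psub_W[OF PP psmult_Param[OF GP(1)] i a c] psmult_W[OF GP(1) i a c] PW embed_W[OF i a c]
        using False GG(2)[OF i a _ c] by simp
    qed
  next
    fix i a assume i: "i < nlayers ns" and a: "a < ns ! Suc i"
    have i': "i < nlayers ?nr" using i by (simp add: nlayers_red)
    have Pb: "snd P ! i $ a = snd (embed ns r) ! i $ a + snd U ! i $ a"
      unfolding P_def by (rule padd_b[OF EP UP i a])
    show "snd (proj ns (psub P (psmult \<eta> G))) ! i $ a = snd (padd (embed ns (psub r (psmult \<eta> G'))) U) ! i $ a"
    proof (cases "a < ?nr ! Suc i")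
      case True
      show ?thesis
        unfolding proj_b[OF XP i a] padd_b[OF embed_Param UP i a] embed_b[OF i a]
          psub_b[OF PP psmult_Param[OF GP(1)] i a] psmult_b[OF GP(1) i a] Pb embed_b[OF i a]
          psub_b[OF r psmult_Param[OF GP(2)] i' True] psmult_b[OF GP(2) i' True]
          Ub[OF i a] GG(3)[OF i True]
        using True by simp
    next
      case False
      show ?thesis
        unfolding proj_b[OF XP i a] padd_b[OF embed_Param UP i a] embed_b[OF i a] Ub[OF i a]
        using False by simp
    qed
  qed
  then show "pgd_step ?f \<eta> ns (padd (embed ns r) U) = padd (embed ns (gd_step ?f \<eta> ?nr r)) U"
    unfolding pgd_step_def gd_step_def G_def G'_def P_def .
qed

section \<open>The QR compression algorithm\<close>

lemma aug_carrier: "M \<in> carrier_mat n m \<Longrightarrow> aug b M \<in> carrier_mat n (Suc m)"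
  by (simp add: aug_def)

lemma aug_col0: "M \<in> carrier_mat n m \<Longrightarrow> b \<in> carrier_vec n \<Longrightarrow> col (aug b M) 0 = b"
  by (intro eq_vecI) (auto simp: aug_def)

lemma aug_colS: "M \<in> carrier_mat n m \<Longrightarrow> c < m \<Longrightarrow> col (aug b M) (Suc c) = col M c"
  by (intro eq_vecI) (auto simp: aug_def)

lemma Inc_carrier: "Inc n k \<in> carrier_mat n k"
  by (simp add: Inc_def)

lemma mult_Inc:
  assumes B: "B \<in> carrier_mat m n" and a: "a < m" and c: "c < k" and k: "k \<le> n"
  shows "(B * Inc n k) $$ (a, c) = B $$ (a, c)"
proof -
  have "(B * Inc n k) $$ (a, c) = (\<Sum>j\<in>{0..<n}. B $$ (a, j) * (if j = c then 1 else 0))"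
    using B a c k by (simp add: Inc_def scalar_prod_def)
  also have "\<dots> = B $$ (a, c)" using c k by (simp add: if_distrib[of "\<lambda>x. _ * x"] cong: if_cong)
  finally show ?thesis .
qed

lemma Inc_mult:
  assumes R: "R \<in> carrier_mat k m" and a: "a < n" and c: "c < m" and k: "k \<le> n"
  shows "(Inc n k * R) $$ (a, c) = (if a < k then R $$ (a, c) else 0)"
proof -
  have "(Inc n k * R) $$ (a, c) = (\<Sum>j\<in>{0..<k}. (if a = j then 1 else 0) * R $$ (j, c))"
    using R a c k by (simp add: Inc_def scalar_prod_def)
  also have "\<dots> = (if a < k then R $$ (a, c) else 0)"
    by (simp add: if_distrib[of "\<lambda>x. x * _"] cong: if_cong)
  finally show ?thesis .
qed

lemma qr_layer:
  fixes Qm R M :: "real mat" and b :: "real vec"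
  assumes Q: "orth_mat n Qm" and R: "R \<in> carrier_mat k (Suc m)"
    and eq: "aug b M = Qm * Inc n k * R" and M: "M \<in> carrier_mat n m" and b: "b \<in> carrier_vec n"
    and k: "k \<le> n" and a: "a < n"
  shows "c < m \<Longrightarrow> (transpose_mat Qm *\<^sub>v col M c) $ a = (if a < k then R $$ (a, Suc c) else 0)"
    and "(transpose_mat Qm *\<^sub>v b) $ a = (if a < k then R $$ (a, 0) else 0)"
proof -
  have Qc: "Qm \<in> carrier_mat n n" and Qt: "transpose_mat Qm \<in> carrier_mat n n"
    and I: "transpose_mat Qm * Qm = 1\<^sub>m n" using Q by (auto simp: orth_mat_def)
  have Ic: "Inc n k \<in> carrier_mat n k" by (rule Inc_carrier)
  have QI: "Qm * Inc n k \<in> carrier_mat n k" using Qc Ic by (rule mult_carrier_mat)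
  have "transpose_mat Qm * (Qm * Inc n k * R) = (transpose_mat Qm * (Qm * Inc n k)) * R"
    using assoc_mult_mat[OF Qt QI R] by (rule sym)
  also have "transpose_mat Qm * (Qm * Inc n k) = (transpose_mat Qm * Qm) * Inc n k"
    using assoc_mult_mat[OF Qt Qc Ic] by (rule sym)
  finally have TX: "transpose_mat Qm * aug b M = Inc n k * R" unfolding eq I using Ic by simp
  have X: "aug b M \<in> carrier_mat n (Suc m)" by (rule aug_carrier[OF M])
  have gen: "(transpose_mat Qm *\<^sub>v col (aug b M) j) $ a = (if a < k then R $$ (a, j) else 0)" if j: "j < Suc m" for j
  proof -
    have "(transpose_mat Qm *\<^sub>v col (aug b M) j) $ a = (transpose_mat Qm * aug b M) $$ (a, j)"
      using Qt X a j by simp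
    also have "\<dots> = (if a < k then R $$ (a, j) else 0)" unfolding TX by (rule Inc_mult[OF R a j k])
    finally show ?thesis .
  qed
  show "c < m \<Longrightarrow> (transpose_mat Qm *\<^sub>v col M c) $ a = (if a < k then R $$ (a, Suc c) else 0)"
    using gen[of "Suc c"] aug_colS[OF M] by simp
  show "(transpose_mat Qm *\<^sub>v b) $ a = (if a < k then R $$ (a, 0) else 0)"
    using gen[of 0] aug_col0[OF M b] by simp
qed

lemma sand_col:
  fixes A W B :: "real mat"
  assumes A: "A \<in> carrier_mat n' n'" and W: "W \<in> carrier_mat n' n" and B: "B \<in> carrier_mat n n"
    and a: "a < n'" and c: "c < n"
  shows "(transpose_mat A * W * B) $$ (a, c) = (transpose_mat A *\<^sub>v col (W * B) c) $ a"
proof -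
  have At: "transpose_mat A \<in> carrier_mat n' n'" using A by simp
  have "transpose_mat A * W * B = transpose_mat A * (W * B)" by (rule assoc_mult_mat[OF At W B])
  moreover have "(transpose_mat A * (W * B)) $$ (a, c) = (transpose_mat A *\<^sub>v col (W * B) c) $ a"
    using At W B a c by simp
  ultimately show ?thesis by simp
qed

lemma qr_good:
  assumes L2: "length ns \<ge> 2" and p: "p \<in> Param ns" and qr: "qr_outputs ns p Q pr"
  shows "orthE ns Q" and "good ns (act_inv ns Q p) pr"
proof -
  let ?L = "nlayers ns"
  let ?nr = "red_widths ns"
  have L1: "?L \<ge> 1" using L2 by (simp add: nlayers_def)
  have lens: "length (fst pr) = ?L" "length (snd pr) = ?L"
    using qr by (auto simp: qr_outputs_def Let_def)
  obtain R where HR: "\<And>i. 1 \<le> i \<Longrightarrow> i \<le> ?L - 1 \<Longrightarrow>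
          orth_mat (ns ! i) (Q i) \<and>
          R i \<in> carrier_mat (?nr ! i) (1 + ?nr ! (i - 1)) \<and> upper_triangular (R i) \<and>
          qrA ns p Q i = Q i * Inc (ns ! i) (?nr ! i) * R i \<and>
          snd pr ! (i - 1) = col (R i) 0 \<and>
          fst pr ! (i - 1) = mat (?nr ! i) (?nr ! (i - 1)) (\<lambda>(r, c). R i $$ (r, Suc c))"
    using qr unfolding qr_outputs_def Let_def by blast
  have lastb: "snd pr ! (?L - 1) = col (qrA ns p Q ?L) 0"
    and lastW: "fst pr ! (?L - 1) = mat (dim_row (qrA ns p Q ?L)) (dim_col (qrA ns p Q ?L) - 1)
                             (\<lambda>(r, c). qrA ns p Q ?L $$ (r, Suc c))"
    using qr unfolding qr_outputs_def Let_def by auto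
  show oE: "orthE ns Q" unfolding orthE_def
  proof (intro allI impI)
    fix j assume j: "j \<le> ?L"
    show "orth_mat (ns ! j) (Qext ns Q j)"
    proof (cases "j = 0 \<or> j = ?L")
      case True
      then show ?thesis by (simp add: Qext_def orth_mat_def)
    next
      case False
      then have "1 \<le> j" "j \<le> ?L - 1" using j by auto
      then show ?thesis using HR False by (simp add: Qext_def)
    qed
  qed
  define M where "M k = (if k = 0 then fst p ! 0 else fst p ! k * Q k * Inc (ns ! k) (?nr ! k))" for k
  have qrA_Suc: "qrA ns p Q (Suc k) = aug (snd p ! k) (M k)" for k
    by (cases k) (auto simp: M_def)
  have Qk: "Qext ns Q k = Q k" if "1 \<le> k" "k \<le> ?L - 1" for k
    using that L1 by (auto simp: Qext_def)
  have Qc: "Q k \<in> carrier_mat (ns ! k) (ns ! k)" if "1 \<le> k" "k \<le> ?L - 1" for k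
    using HR[OF that] by (simp add: orth_mat_def)
  have nr0: "?nr ! 0 = ns ! 0" by (rule red_0[OF L2])
  have nrL: "?nr ! ?L = ns ! ?L" by (rule red_L[OF L2])
  have Mc: "M k \<in> carrier_mat (ns ! Suc k) (?nr ! k)" if k: "k < ?L" for k
  proof (cases "k = 0")
    case True
    then show ?thesis using ParamD(3)[OF p k] nr0 by (simp add: M_def)
  next
    case False
    have "Q k \<in> carrier_mat (ns ! k) (ns ! k)" using Qc[of k] False k by simp
    then have "fst p ! k * Q k \<in> carrier_mat (ns ! Suc k) (ns ! k)"
      using ParamD(3)[OF p k] by (intro mult_carrier_mat)
    then have "fst p ! k * Q k * Inc (ns ! k) (?nr ! k) \<in> carrier_mat (ns ! Suc k) (?nr ! k)"
      using Inc_carrier by (rule mult_carrier_mat)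
    then show ?thesis using False by (simp add: M_def)
  qed
  have colM: "col (M k) c = col (fst p ! k * Qext ns Q k) c" if k: "k < ?L" and c: "c < ?nr ! k" for k c
  proof -
    have Qe: "Qext ns Q k \<in> carrier_mat (ns ! k) (ns ! k)" using orthE_D(1)[OF oE, of k] k by simp
    have WQ: "fst p ! k * Qext ns Q k \<in> carrier_mat (ns ! Suc k) (ns ! k)"
      using ParamD(3)[OF p k] Qe by (rule mult_carrier_mat)
    have le: "?nr ! k \<le> ns ! k" using red_le[OF _ L2, of k] k by simp
    show ?thesis
    proof (rule eq_vecI)
      fix a assume "a < dim_vec (col (fst p ! k * Qext ns Q k) c)"
      then have a: "a < ns ! Suc k" using WQ ParamD(3)[OF p k] by simp
      show "col (M k) c $ a = col (fst p ! k * Qext ns Q k) c $ a"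
      proof (cases "k = 0")
        case True
        then show ?thesis using a c nr0 ParamD(3)[OF p k] Mc[OF k] by (simp add: M_def Qext_def)
      next
        case False
        have QkE: "Qext ns Q k = Q k" using Qk[of k] False k by simp
        have "M k $$ (a, c) = (fst p ! k * Q k) $$ (a, c)"
          using False mult_Inc[OF WQ[unfolded QkE] a c le] by (simp add: M_def)
        moreover have "dim_row (fst p ! k * Q k) = ns ! Suc k" "dim_col (fst p ! k * Q k) = ns ! k"
          using WQ QkE by auto
        moreover have "dim_row (M k) = ns ! Suc k" "dim_col (M k) = ?nr ! k" using Mc[OF k] by auto
        ultimately show ?thesis using a c le QkE by simp
      qed
    qed (use Mc[OF k] WQ ParamD(3)[OF p k] in simp)
  qed
  have prP: "pr \<in> Param ?nr"
  proof (rule ParamI)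
    show "length (fst pr) = nlayers ?nr" "length (snd pr) = nlayers ?nr" using lens by (auto simp: nlayers_red)
  next
    fix i assume "i < nlayers ?nr"
    then have i: "i < ?L" by (simp add: nlayers_red)
    have "fst pr ! i \<in> carrier_mat (?nr ! Suc i) (?nr ! i) \<and> snd pr ! i \<in> carrier_vec (?nr ! Suc i)"
    proof (cases "Suc i < ?L")
      case True
      then have h: "1 \<le> Suc i" "Suc i \<le> ?L - 1" by auto
      have Rc: "R (Suc i) \<in> carrier_mat (?nr ! Suc i) (1 + ?nr ! i)" and sb: "snd pr ! i = col (R (Suc i)) 0"
        and sW: "fst pr ! i = mat (?nr ! Suc i) (?nr ! i) (\<lambda>(r, c). R (Suc i) $$ (r, Suc c))"
        using HR[OF h] by (simp_all only: diff_Suc_1)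
      have dr: "dim_row (R (Suc i)) = ?nr ! Suc i" using Rc by (rule carrier_matD)
      have "col (R (Suc i)) 0 \<in> carrier_vec (?nr ! Suc i)" using col_dim[of "R (Suc i)" 0] unfolding dr .
      moreover have "mat (?nr ! Suc i) (?nr ! i) (\<lambda>(r, c). R (Suc i) $$ (r, Suc c)) \<in> carrier_mat (?nr ! Suc i) (?nr ! i)"
        by (rule mat_carrier)
      ultimately show ?thesis unfolding sb sW by (rule conjI[rotated])
    next
      case False
      then have iL: "?L = Suc i" using i by auto
      have X: "aug (snd p ! i) (M i) \<in> carrier_mat (ns ! Suc i) (Suc (?nr ! i))"
        by (rule aug_carrier[OF Mc[OF i]])
      have lastb': "snd pr ! i = col (aug (snd p ! i) (M i)) 0" using lastb unfolding iL qrA_Suc by simp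
      have lastW': "fst pr ! i = mat (dim_row (aug (snd p ! i) (M i))) (dim_col (aug (snd p ! i) (M i)) - 1)
                             (\<lambda>(r, c). aug (snd p ! i) (M i) $$ (r, Suc c))"
        using lastW unfolding iL qrA_Suc by simp
      have nrS: "?nr ! Suc i = ns ! Suc i" using nrL unfolding iL .
      have "snd pr ! i = snd p ! i" unfolding lastb' by (rule aug_col0[OF Mc[OF i] ParamD(4)[OF p i]])
      then show ?thesis unfolding lastW' using X ParamD(4)[OF p i] nrS by auto
    qed
    then show "fst pr ! i \<in> carrier_mat (?nr ! Suc i) (?nr ! i)" "snd pr ! i \<in> carrier_vec (?nr ! Suc i)" by auto
  qed
  show "good ns (act_inv ns Q p) pr" unfolding good_def
  proof (intro conjI allI impI act_inv_Param[OF oE p] prP)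
    fix i a c assume i: "i < ?L" and a: "a < ns ! Suc i" and c: "c < ?nr ! i"
    have c': "c < ns ! i" using c red_le[OF _ L2, of i] i by simp
    have A: "Qext ns Q (Suc i) \<in> carrier_mat (ns ! Suc i) (ns ! Suc i)" using orthE_D(1)[OF oE, of "Suc i"] i by simp
    have B: "Qext ns Q i \<in> carrier_mat (ns ! i) (ns ! i)" using orthE_D(1)[OF oE, of i] i by simp
    have e1: "fst (act_inv ns Q p) ! i $$ (a, c) = (transpose_mat (Qext ns Q (Suc i)) *\<^sub>v col (M i) c) $ a"
      unfolding act_inv_nth[OF p i] sand_col[OF A ParamD(3)[OF p i] B a c'] colM[OF i c] ..
    show "fst (act_inv ns Q p) ! i $$ (a, c) = (if a < ?nr ! Suc i then fst pr ! i $$ (a, c) else 0)"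
    proof (cases "Suc i < ?L")
      case True
      then have h: "1 \<le> Suc i" "Suc i \<le> ?L - 1" by auto
      have Ho: "orth_mat (ns ! Suc i) (Q (Suc i))"
        and Rc0: "R (Suc i) \<in> carrier_mat (?nr ! Suc i) (1 + ?nr ! i)"
        and Hq: "qrA ns p Q (Suc i) = Q (Suc i) * Inc (ns ! Suc i) (?nr ! Suc i) * R (Suc i)"
        and sb: "snd pr ! i = col (R (Suc i)) 0"
        and sW: "fst pr ! i = mat (?nr ! Suc i) (?nr ! i) (\<lambda>(r, c). R (Suc i) $$ (r, Suc c))"
        using HR[OF h] by (simp_all only: diff_Suc_1)
      have Heq: "aug (snd p ! i) (M i) = Q (Suc i) * Inc (ns ! Suc i) (?nr ! Suc i) * R (Suc i)"
        using Hq unfolding qrA_Suc .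
      have QS: "Qext ns Q (Suc i) = Q (Suc i)" by (rule Qk[OF h])
      have Rc: "R (Suc i) \<in> carrier_mat (?nr ! Suc i) (Suc (?nr ! i))" using Rc0 by (simp only: plus_1_eq_Suc)
      have le: "?nr ! Suc i \<le> ns ! Suc i" using red_le[OF _ L2, of "Suc i"] True by simp
      have "(transpose_mat (Q (Suc i)) *\<^sub>v col (M i) c) $ a = (if a < ?nr ! Suc i then R (Suc i) $$ (a, Suc c) else 0)"
        by (rule qr_layer(1)[OF Ho Rc Heq Mc[OF i] ParamD(4)[OF p i] le a c])
      moreover have "a < ?nr ! Suc i \<Longrightarrow> fst pr ! i $$ (a, c) = R (Suc i) $$ (a, Suc c)"
        unfolding sW using c by simp
      ultimately show ?thesis unfolding e1 QS by auto
    next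
      case False
      then have iL: "?L = Suc i" using i by auto
      have QS: "Qext ns Q (Suc i) = 1\<^sub>m (ns ! Suc i)" using iL by (simp add: Qext_def)
      have lastW': "fst pr ! i = mat (dim_row (aug (snd p ! i) (M i))) (dim_col (aug (snd p ! i) (M i)) - 1)
                             (\<lambda>(r, c). aug (snd p ! i) (M i) $$ (r, Suc c))"
        using lastW unfolding iL qrA_Suc by simp
      have nrS: "?nr ! Suc i = ns ! Suc i" using nrL unfolding iL .
      have "(transpose_mat (Qext ns Q (Suc i)) *\<^sub>v col (M i) c) $ a = M i $$ (a, c)"
        unfolding QS using Mc[OF i] a c by simp
      moreover have "fst pr ! i $$ (a, c) = M i $$ (a, c)"
        unfolding lastW' using Mc[OF i] a c by (simp add: aug_def)
      moreover have "a < ?nr ! Suc i" using a nrS by simp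
      ultimately show ?thesis unfolding e1 by simp
    qed
  next
    fix i a assume i: "i < ?L" and a: "a < ns ! Suc i"
    show "snd (act_inv ns Q p) ! i $ a = (if a < ?nr ! Suc i then snd pr ! i $ a else 0)"
    proof (cases "Suc i < ?L")
      case True
      then have h: "1 \<le> Suc i" "Suc i \<le> ?L - 1" by auto
      have Ho: "orth_mat (ns ! Suc i) (Q (Suc i))"
        and Rc0: "R (Suc i) \<in> carrier_mat (?nr ! Suc i) (1 + ?nr ! i)"
        and Hq: "qrA ns p Q (Suc i) = Q (Suc i) * Inc (ns ! Suc i) (?nr ! Suc i) * R (Suc i)"
        and sb: "snd pr ! i = col (R (Suc i)) 0"
        and sW: "fst pr ! i = mat (?nr ! Suc i) (?nr ! i) (\<lambda>(r, c). R (Suc i) $$ (r, Suc c))"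
        using HR[OF h] by (simp_all only: diff_Suc_1)
      have Heq: "aug (snd p ! i) (M i) = Q (Suc i) * Inc (ns ! Suc i) (?nr ! Suc i) * R (Suc i)"
        using Hq unfolding qrA_Suc .
      have QS: "Qext ns Q (Suc i) = Q (Suc i)" by (rule Qk[OF h])
      have Rc: "R (Suc i) \<in> carrier_mat (?nr ! Suc i) (Suc (?nr ! i))" using Rc0 by (simp only: plus_1_eq_Suc)
      have le: "?nr ! Suc i \<le> ns ! Suc i" using red_le[OF _ L2, of "Suc i"] True by simp
      have "(transpose_mat (Q (Suc i)) *\<^sub>v snd p ! i) $ a = (if a < ?nr ! Suc i then R (Suc i) $$ (a, 0) else 0)"
        by (rule qr_layer(2)[OF Ho Rc Heq Mc[OF i] ParamD(4)[OF p i] le a])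
      moreover have "a < ?nr ! Suc i \<Longrightarrow> snd pr ! i $ a = R (Suc i) $$ (a, 0)"
        unfolding sb using Rc by simp
      ultimately show ?thesis unfolding act_inv_nth[OF p i] QS by auto
    next
      case False
      then have iL: "?L = Suc i" using i by auto
      have QS: "Qext ns Q (Suc i) = 1\<^sub>m (ns ! Suc i)" using iL by (simp add: Qext_def)
      have lastb': "snd pr ! i = col (aug (snd p ! i) (M i)) 0" using lastb unfolding iL qrA_Suc by simp
      have nrS: "?nr ! Suc i = ns ! Suc i" using nrL unfolding iL .
      have "snd pr ! i = snd p ! i" unfolding lastb' by (rule aug_col0[OF Mc[OF i] ParamD(4)[OF p i]])
      moreover have "a < ?nr ! Suc i" using a nrS by simp
      ultimately show ?thesis unfolding act_inv_nth[OF p i] QS using ParamD(4)[OF p i] by simp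
    qed
  qed
qed

lemma embed_psub_cancel:
  assumes A: "A \<in> Param ns"
  shows "padd (embed ns r) (psub A (embed ns r)) = A"
proof (rule param_eqI[OF padd_Param[OF embed_Param psub_Param[OF A embed_Param]] A])
  fix i a c assume i: "i < nlayers ns" and a: "a < ns ! Suc i" and c: "c < ns ! i"
  show "fst (padd (embed ns r) (psub A (embed ns r))) ! i $$ (a, c) = fst A ! i $$ (a, c)"
    unfolding padd_entries[OF embed_Param psub_Param[OF A embed_Param] i a c] psub_W[OF A embed_Param i a c]
    by simp
next
  fix i a assume i: "i < nlayers ns" and a: "a < ns ! Suc i"
  show "snd (padd (embed ns r) (psub A (embed ns r))) ! i $ a = snd A ! i $ a"
    unfolding padd_b[OF embed_Param psub_Param[OF A embed_Param] i a] psub_b[OF A embed_Param i a]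
    by simp
qed

theorem theorem4:
  fixes ns :: "nat list" and h :: "nat \<Rightarrow> real \<Rightarrow> real"
    and D :: "(real vec \<times> real vec) list" and C :: "real vec \<Rightarrow> real vec \<Rightarrow> real"
    and \<eta> :: real and p pr :: param and Q :: "nat \<Rightarrow> real mat"
  assumes "length ns \<ge> 2"
    and "\<forall>i. 1 \<le> i \<and> i \<le> nlayers ns \<longrightarrow> piecewise_differentiable (h i)"
    and "\<forall>(x, y) \<in> set D. x \<in> carrier_vec (ns ! 0) \<and> y \<in> carrier_vec (ns ! nlayers ns)"
    and "\<eta> > 0"
    and "differentiable_on_Param (loss h C D) ns"
    and "differentiable_on_Param (loss h C D) (red_widths ns)"
    and "p \<in> Param ns"
    and "qr_outputs ns p Q pr"
  shows "\<forall>k::nat.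
     (gd_step (loss h C D) \<eta> ns ^^ k) p
       = act ns Q ((gd_step (loss h C D) \<eta> ns ^^ k) (act_inv ns Q p))
   \<and> (pgd_step (loss h C D) \<eta> ns ^^ k) (act_inv ns Q p)
       = padd (embed ns ((gd_step (loss h C D) \<eta> (red_widths ns) ^^ k) pr))
              (psub (act_inv ns Q p) (embed ns pr))"
proof -
  note L2 = assms(1) and df = assms(5) and dfr = assms(6) and p = assms(7) and qr = assms(8)
  have D: "\<forall>(x, y) \<in> set D. x \<in> carrier_vec (ns ! 0)" using assms(3) by auto
  have oE: "orthE ns Q" and gA: "good ns (act_inv ns Q p) pr" using qr_good[OF L2 p qr] by auto
  have A0P: "act_inv ns Q p \<in> Param ns" by (rule act_inv_Param[OF oE p])
  have prP: "pr \<in> Param (red_widths ns)" using gA by (simp add: good_def)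
  have inv: "\<And>z. z \<in> Param ns \<Longrightarrow> loss h C D (act ns Q z) = loss h C D z"
    by (rule loss_act[OF oE _ D])
  show ?thesis
  proof (intro allI conjI)
    fix k :: nat
    have "(gd_step (loss h C D) \<eta> ns ^^ k) (act ns Q (act_inv ns Q p))
        = act ns Q ((gd_step (loss h C D) \<eta> ns ^^ k) (act_inv ns Q p))"
      by (rule gd_iter_act[OF df oE A0P inv])
    then show "(gd_step (loss h C D) \<eta> ns ^^ k) p
       = act ns Q ((gd_step (loss h C D) \<eta> ns ^^ k) (act_inv ns Q p))"
      unfolding act_act_inv[OF oE p] .
  next
    fix k :: nat
    show "(pgd_step (loss h C D) \<eta> ns ^^ k) (act_inv ns Q p)
       = padd (embed ns ((gd_step (loss h C D) \<eta> (red_widths ns) ^^ k) pr))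
              (psub (act_inv ns Q p) (embed ns pr))"
    proof (induction k)
      case 0
      show ?case using embed_psub_cancel[OF A0P, of pr] by simp
    next
      case (Suc k)
      have rk: "(gd_step (loss h C D) \<eta> (red_widths ns) ^^ k) pr \<in> Param (red_widths ns)"
        by (rule gd_iter_Param[OF dfr prP])
      show ?case using Suc pgd_step_good(2)[OF L2 D df dfr gA rk, of \<eta>] by simp
    qed
  qed
qed

end
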